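(* Every word $W$ in the letters $\sigma_i,\sigma_i^{-1},x_i$ ($1\le i\le n-1$) is equal in $SB_n$ to $\Delta^m\overline{A}$ for some integer $m$ and some positive word $\overline{A}$ which is prime to $\Delta$ and is its own base; moreover this expression is unique: if $\Delta^m\overline{A}=\Delta^p\overline{C}$ in $SB_n$ with $m,p\in\mathbb Z$ and $\overline{A},\overline{C}$ positive words prime to $\Delta$ each equal to its own base, then $m=p$ and $\overline{A}\equiv\overline{C}$ (identical words).
   Context: Fix $n\ge 2$. The singular braid monoid $SB_n$ is the monoid with generators $\sigma_i,\sigma_i^{-1},x_i$ ($i=1,\dots,n-1$) and relations: $\sigma_i\sigma_j=\sigma_j\sigma_i$ and $x_ix_j=x_jx_i$ if $|i-j|>1$; $x_i\sigma_j=\sigma_jx_i$ if $|i-j|\ne1$; $\sigma_i\sigma_{i+1}\sigma_i=\sigma_{i+1}\sigma_i\sigma_{i+1}$; $\sigma_i\sigma_{i+1}x_i=x_{i+1}\sigma_i\sigma_{i+1}$; $\sigma_{i+1}\sigma_ix_{i+1}=x_i\sigma_{i+1}\sigma_i$; $\sigma_i\sigma_i^{-1}=\sigma_i^{-1}\sigma_i=1$. The positive singular braid monoid $SB_n^+$ has generators $\sigma_i,x_i$ and all these relations except the last. Positive words are words in $\sigma_i,x_i$; $A\doteq B$ means equality in $SB_n^+$; $\equiv$ means identity of words. $\Delta\equiv\sigma_1\cdots\sigma_{n-1}\,\sigma_1\cdots\sigma_{n-2}\cdots\sigma_1\sigma_2\,\sigma_1$. A positive word $A$ is prime to $\Delta$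 if there is no positive word $Z$ with $A\doteq\Delta Z$. Order positive words lexicographically with $\sigma_1<\sigma_2<\cdots<\sigma_{n-1}<x_1<\cdots<x_{n-1}$; the base of a positive word $W$ is the smallest (in this order) positive word positively equal to $W$ (positively equal words have equal length, so this is well defined). The form $\Delta^m\overline{A}$ is called the Garside left normal form of $W$, and $m$ its power. *)

theory Defs
  imports Main
begin

text \<open>Letters: Sig i = sigma_i, SigInv i = sigma_i inverse, X i = x_i (indices 1..n-1).
  Words are lists of letters.\<close>

datatype letter = Sig nat | SigInv nat | X nat

type_synonym word = "letter list"

definition idx_ok :: "nat \<Rightarrow> nat \<Rightarrow> bool" where
  "idx_ok n i \<longleftrightarrow> 1 \<le> i \<and> i \<le> n - 1"

fun letter_idx :: "letter \<Rightarrow> nat" where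
  "letter_idx (Sig i) = i" | "letter_idx (SigInv i) = i" | "letter_idx (X i) = i"

fun is_pos_letter :: "letter \<Rightarrow> bool" where
  "is_pos_letter (Sig i) = True" | "is_pos_letter (SigInv i) = False" | "is_pos_letter (X i) = True"

definition sb_word :: "nat \<Rightarrow> word \<Rightarrow> bool" where
  "sb_word n w \<longleftrightarrow> (\<forall>a\<in>set w. idx_ok n (letter_idx a))"

definition pos_word :: "nat \<Rightarrow> word \<Rightarrow> bool" where
  "pos_word n w \<longleftrightarrow> (\<forall>a\<in>set w. is_pos_letter a \<and> idx_ok n (letter_idx a))"

definition pos_rels :: "nat \<Rightarrow> (word \<times> word) set" where
  "pos_rels n =
     {([Sig i, Sig j], [Sig j, Sig i]) | i j. idx_ok n i \<and> idx_ok n j \<and> (i + 1 < j \<or> j + 1 < i)}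
   \<union> {([X i, X j], [X j, X i]) | i j. idx_ok n i \<and> idx_ok n j \<and> (i + 1 < j \<or> j + 1 < i)}
   \<union> {([X i, Sig j], [Sig j, X i]) | i j. idx_ok n i \<and> idx_ok n j \<and> i \<noteq> j + 1 \<and> j \<noteq> i + 1}
   \<union> {([Sig i, Sig (i+1), Sig i], [Sig (i+1), Sig i, Sig (i+1)]) | i. idx_ok n i \<and> idx_ok n (i+1)}
   \<union> {([Sig i, Sig (i+1), X i], [X (i+1), Sig i, Sig (i+1)]) | i. idx_ok n i \<and> idx_ok n (i+1)}
   \<union> {([Sig (i+1), Sig i, X (i+1)], [X i, Sig (i+1), Sig i]) | i. idx_ok n i \<and> idx_ok n (i+1)}"

definition sb_rels :: "nat \<Rightarrow> (word \<times> word) set" where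
  "sb_rels n = pos_rels n
     \<union> {([Sig i, SigInv i], []) | i. idx_ok n i}
     \<union> {([SigInv i, Sig i], []) | i. idx_ok n i}"

inductive cong_gen :: "(word \<times> word) set \<Rightarrow> word \<Rightarrow> word \<Rightarrow> bool" for R where
  refl: "cong_gen R u u"
| sym: "cong_gen R u v \<Longrightarrow> cong_gen R v u"
| trans: "cong_gen R u v \<Longrightarrow> cong_gen R v w \<Longrightarrow> cong_gen R u w"
| rel: "(l, r) \<in> R \<Longrightarrow> cong_gen R (a @ l @ b) (a @ r @ b)"

definition pos_eq :: "nat \<Rightarrow> word \<Rightarrow> word \<Rightarrow> bool" where
  "pos_eq n = cong_gen (pos_rels n)"

definition sb_eq :: "nat \<Rightarrow> word \<Rightarrow> word \<Rightarrow> bool" where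
  "sb_eq n = cong_gen (sb_rels n)"

text \<open>Delta = sigma_1..sigma_{n-1} sigma_1..sigma_{n-2} ... sigma_1 sigma_2 sigma_1.\<close>
definition delta :: "nat \<Rightarrow> word" where
  "delta n = concat (map (\<lambda>k. map Sig [1..<k+1]) (rev [1..<n]))"

fun inv_letter :: "letter \<Rightarrow> letter" where
  "inv_letter (Sig i) = SigInv i" | "inv_letter (SigInv i) = Sig i" | "inv_letter (X i) = X i"

definition inv_word :: "word \<Rightarrow> word" where
  "inv_word w = rev (map inv_letter w)"

definition delta_pow :: "nat \<Rightarrow> int \<Rightarrow> word" where
  "delta_pow n m = (if 0 \<le> m then concat (replicate (nat m) (delta n))
                    else concat (replicate (nat (- m)) (inv_word (delta n))))"

definition prime_to_delta :: "nat \<Rightarrow> word \<Rightarrow> bool" where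
  "prime_to_delta n A \<longleftrightarrow> \<not> (\<exists>Z. pos_word n Z \<and> pos_eq n A (delta n @ Z))"

text \<open>Letter order sigma_1 < ... < sigma_{n-1} < x_1 < ... < x_{n-1} via ranks.\<close>
fun rank :: "nat \<Rightarrow> letter \<Rightarrow> nat" where
  "rank n (Sig i) = i" | "rank n (X i) = n + i" | "rank n (SigInv i) = 0"

definition word_less :: "nat \<Rightarrow> word \<Rightarrow> word \<Rightarrow> bool" where
  "word_less n u v \<longleftrightarrow> (map (rank n) u, map (rank n) v) \<in> lexord {(a, b). a < b}"

text \<open>The base of a positive word W is the lexicographically smallest positive word
  positively equal to W; A is its own base iff it is that smallest word.\<close>
definition own_base :: "nat \<Rightarrow> word \<Rightarrow> bool" where
  "own_base n A \<longleftrightarrow> (\<forall>B. pos_word n B \<and> pos_eq n A B \<longrightarrow> A = B \<or> word_less n A B)"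

end

theory Submission
  imports Defs "HOL-Library.List_Lexorder"
begin


lemma pe_refl[simp]: "pos_eq n u u" unfolding pos_eq_def by (rule cong_gen.refl)
lemma pe_sym: "pos_eq n u v \<Longrightarrow> pos_eq n v u" unfolding pos_eq_def by (rule cong_gen.sym)
lemma pe_trans[trans]: "pos_eq n u v \<Longrightarrow> pos_eq n v w \<Longrightarrow> pos_eq n u w" unfolding pos_eq_def by (rule cong_gen.trans)

lemma cg_app: "cong_gen R u v \<Longrightarrow> cong_gen R (w@u@z) (w@v@z)"
proof (induction rule: cong_gen.induct)
  case (refl u) then show ?case by (rule cong_gen.refl)
next
  case (sym u v) then show ?case by (blast intro: cong_gen.sym)
next
  case (trans u v w') then show ?case by (metis cong_gen.trans)
next
  case (rel l r a b) then show ?case using cong_gen.rel[of l r R "w@a" "b@z"] by simp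
qed

lemma pe_app: "pos_eq n u v \<Longrightarrow> pos_eq n (w@u@z) (w@v@z)" unfolding pos_eq_def by (rule cg_app)
lemma pe_appL: "pos_eq n u v \<Longrightarrow> pos_eq n (w@u) (w@v)" using pe_app[of n u v w "[]"] by simp
lemma pe_appR: "pos_eq n u v \<Longrightarrow> pos_eq n (u@z) (v@z)" using pe_app[of n u v "[]" z] by simp
lemma pe_cons: "pos_eq n u v \<Longrightarrow> pos_eq n (a#u) (a#v)" using pe_appL[of n u v "[a]"] by simp
lemma pe_cat: "pos_eq n u v \<Longrightarrow> pos_eq n u' v' \<Longrightarrow> pos_eq n (u@u') (v@v')"
  by (meson pe_appL pe_appR pe_trans)

lemma pe_rel: "(l,r) \<in> pos_rels n \<Longrightarrow> pos_eq n l r"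
  unfolding pos_eq_def using cong_gen.rel[of l r "pos_rels n" "[]" "[]"] by simp
lemma pe_rel': "(r,l) \<in> pos_rels n \<Longrightarrow> pos_eq n l r"
  using pe_rel pe_sym by blast

lemma pos_word_simps[simp]:
  "pos_word n [] = True"
  "pos_word n (a#u) = (is_pos_letter a \<and> idx_ok n (letter_idx a) \<and> pos_word n u)"
  "pos_word n (u@v) = (pos_word n u \<and> pos_word n v)"
  unfolding pos_word_def by auto

lemma pos_rels_len: "(l,r) \<in> pos_rels n \<Longrightarrow> length l = length r"
  unfolding pos_rels_def by auto

lemma pos_rels_pos: "(l,r) \<in> pos_rels n \<Longrightarrow> pos_word n l \<and> pos_word n r"
  unfolding pos_rels_def by auto

lemma pe_len: "pos_eq n u v \<Longrightarrow> length u = length v"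
  unfolding pos_eq_def
  by (induction rule: cong_gen.induct) (auto dest: pos_rels_len)

lemma pe_pos: "pos_eq n u v \<Longrightarrow> pos_word n u = pos_word n v"
  unfolding pos_eq_def
  by (induction rule: cong_gen.induct) (auto dest: pos_rels_pos)

definition adj :: "nat \<Rightarrow> nat \<Rightarrow> bool" where
  "adj i j \<longleftrightarrow> i + 1 = j \<or> j + 1 = i"

lemma adj_sym: "adj i j = adj j i" unfolding adj_def by auto

fun cpl :: "letter \<Rightarrow> letter \<Rightarrow> (word \<times> word) option" where
  "cpl (Sig i) (Sig j) = (if i = j then Some ([],[]) else if adj i j then Some ([Sig j, Sig i],[Sig i, Sig j]) else Some ([Sig j],[Sig i]))"
| "cpl (X i) (X j) = (if i = j then Some ([],[]) else if adj i j then None else Some ([X j],[X i]))"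
| "cpl (Sig i) (X j) = (if adj i j then Some ([Sig j, X i],[Sig i, Sig j]) else Some ([X j],[Sig i]))"
| "cpl (X i) (Sig j) = (if adj j i then Some ([Sig j, Sig i],[Sig i, X j]) else Some ([Sig j],[X i]))"
| "cpl _ _ = None"

lemma cpl_self: "is_pos_letter d \<Longrightarrow> cpl d d = Some ([],[])" by (cases d) auto

lemma cpl_sym: "cpl e d = map_option prod.swap (cpl d e)"
  by (cases d; cases e) (auto simp: adj_sym)

lemma cpl_swap: "cpl d e = Some (P,Q) \<Longrightarrow> cpl e d = Some (Q,P)"
  using cpl_sym[of d e] by simp

lemma cpl_pos: "pos_word n [d] \<Longrightarrow> pos_word n [e] \<Longrightarrow> cpl d e = Some (P,Q) \<Longrightarrow> pos_word n P \<and> pos_word n Q"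
  by (cases d; cases e) (auto split: if_splits)

lemma cpl_sound: "pos_word n [d] \<Longrightarrow> pos_word n [e] \<Longrightarrow> cpl d e = Some (P,Q) \<Longrightarrow> pos_eq n (d#P) (e#Q)"
proof (cases d; cases e)
  fix i j assume h: "pos_word n [d]" "pos_word n [e]" "cpl d e = Some (P,Q)" "d = Sig i" "e = Sig j"
  show ?thesis
  proof (cases "i = j")
    case True then show ?thesis using h by auto
  next
    case ne: False
    show ?thesis
    proof (cases "i + 1 = j")
      case True then show ?thesis using h ne
        by (intro pe_rel) (auto simp: pos_rels_def adj_def)
    next
      case F1: False
      show ?thesis
      proof (cases "j + 1 = i")
        case True then show ?thesis using h ne F1
          by (intro pe_rel') (auto simp: pos_rels_def adj_def)
      next
        case False then show ?thesis using h ne F1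
          by (intro pe_rel) (auto simp: pos_rels_def adj_def)
      qed
    qed
  qed
next
  fix i j assume h: "pos_word n [d]" "pos_word n [e]" "cpl d e = Some (P,Q)" "d = X i" "e = X j"
  show ?thesis
  proof (cases "i = j")
    case True then show ?thesis using h by auto
  next
    case ne: False
    then show ?thesis using h ne
      by (intro pe_rel) (auto simp: pos_rels_def adj_def split: if_splits)
  qed
next
  fix i j assume h: "pos_word n [d]" "pos_word n [e]" "cpl d e = Some (P,Q)" "d = Sig i" "e = X j"
  show ?thesis
  proof (cases "i + 1 = j")
    case True then show ?thesis using h
      by (intro pe_rel) (auto simp: pos_rels_def adj_def)
  next
    case F1: False
    show ?thesis
    proof (cases "j + 1 = i")
      case True then show ?thesis using h F1
        by (intro pe_rel) (auto simp: pos_rels_def adj_def)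
    next
      case False then show ?thesis using h F1
        by (intro pe_rel') (auto simp: pos_rels_def adj_def)
    qed
  qed
next
  fix i j assume h: "pos_word n [d]" "pos_word n [e]" "cpl d e = Some (P,Q)" "d = X i" "e = Sig j"
  show ?thesis
  proof (cases "j + 1 = i")
    case True then show ?thesis using h
      by (intro pe_rel') (auto simp: pos_rels_def adj_def)
  next
    case F1: False
    show ?thesis
    proof (cases "i + 1 = j")
      case True then show ?thesis using h F1
        by (intro pe_rel') (auto simp: pos_rels_def adj_def)
    next
      case False then show ?thesis using h F1
        by (intro pe_rel) (auto simp: pos_rels_def adj_def)
    qed
  qed
qed (auto)



datatype rres = Ok word word | Fail | NoFuel

fun revf :: "nat \<Rightarrow> word \<Rightarrow> word \<Rightarrow> rres" where
  "revf 0 U V = NoFuel"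
| "revf (Suc k) [] V = Ok V []"
| "revf (Suc k) (d#U) [] = Ok [] (d#U)"
| "revf (Suc k) (d#U) (e#V) = (case cpl d e of None \<Rightarrow> Fail | Some (P,Q) \<Rightarrow>
      (case revf k U P of Ok A1 B1 \<Rightarrow> (case revf k (Q@B1) V of Ok A2 B2 \<Rightarrow> Ok (A1@A2) B2 | r \<Rightarrow> r) | r \<Rightarrow> r))"

lemma revf_sound:
  "revf k U V = Ok A B \<Longrightarrow> pos_word n U \<Longrightarrow> pos_word n V \<Longrightarrow>
     pos_eq n (U@A) (V@B) \<and> pos_word n A \<and> pos_word n B"
proof (induction k U V arbitrary: A B rule: revf.induct)
  case (4 k d U e V)
  obtain P Q where c: "cpl d e = Some (P,Q)" using "4.prems"
    by (cases "cpl d e") (auto split: rres.splits)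
  obtain A1 B1 where r1: "revf k U P = Ok A1 B1" using "4.prems" c
    by (cases "revf k U P") (auto split: rres.splits)
  obtain A2 B2 where r2: "revf k (Q@B1) V = Ok A2 B2" using "4.prems" c r1
    by (cases "revf k (Q@B1) V") (auto split: rres.splits)
  have AB: "A = A1@A2" "B = B2" using "4.prems" c r1 r2 by auto
  have pd: "pos_word n [d]" "pos_word n [e]" using "4.prems" by auto
  have PQ: "pos_word n P" "pos_word n Q" using cpl_pos[OF pd c] by auto
  have i1: "pos_eq n (U@A1) (P@B1) \<and> pos_word n A1 \<and> pos_word n B1"
    using "4.IH"(1)[OF c HOL.refl r1] "4.prems" PQ by auto
  have i2: "pos_eq n (Q@B1@A2) (V@B2) \<and> pos_word n A2 \<and> pos_word n B2"
    using "4.IH"(2)[OF c HOL.refl r1 r2] "4.prems" PQ i1 by auto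
  have "pos_eq n (d#U@A1@A2) (d#P@B1@A2)" using pe_appR[OF i1[THEN conjunct1], of A2] pe_cons by auto
  also have "pos_eq n (d#P@B1@A2) (e#Q@B1@A2)"
    using pe_appR[OF cpl_sound[OF pd c], of "B1@A2"] by simp
  also have "pos_eq n (e#Q@B1@A2) (e#V@B2)" using pe_cons i2 by auto
  finally show ?case using AB i1 i2 by simp
qed auto

definition CANC :: "nat \<Rightarrow> nat \<Rightarrow> bool" where
  "CANC n l \<longleftrightarrow> (\<forall>d e X Y. pos_word n (d#X) \<longrightarrow> pos_word n (e#Y) \<longrightarrow> length X = l \<longrightarrow>
       pos_eq n (d#X) (e#Y) \<longrightarrow> (\<exists>P Q Z. cpl d e = Some (P,Q) \<and> pos_eq n X (P@Z) \<and> pos_eq n Y (Q@Z)))"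

lemma revf_complete:
  assumes C: "\<And>l. l < L \<Longrightarrow> CANC n l"
  shows "revf k U V \<noteq> NoFuel \<Longrightarrow> pos_word n (U@Z1) \<Longrightarrow> pos_word n (V@Z2) \<Longrightarrow>
     pos_eq n (U@Z1) (V@Z2) \<Longrightarrow> length (U@Z1) \<le> L \<Longrightarrow>
     \<exists>A B Z. revf k U V = Ok A B \<and> pos_eq n Z1 (A@Z) \<and> pos_eq n Z2 (B@Z) \<and> pos_word n Z"
proof (induction k U V arbitrary: Z1 Z2 rule: revf.induct)
  case (2 k V)
  then show ?case by (intro exI[of _ V] exI[of _ "[]"] exI[of _ Z2]) auto
next
  case (3 k d U)
  then show ?case by (intro exI[of _ "[]"] exI[of _ "d#U"] exI[of _ Z1]) (auto intro: pe_sym)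
next
  case (4 k d U e V)
  have "CANC n (length (U@Z1))" using C "4.prems" by simp
  then obtain P Q Z3 where c: "cpl d e = Some (P,Q)" and e1: "pos_eq n (U@Z1) (P@Z3)"
     and e2: "pos_eq n (V@Z2) (Q@Z3)"
    using "4.prems" unfolding CANC_def by (metis append_Cons)
  have pd: "pos_word n [d]" "pos_word n [e]" using "4.prems" by auto
  have PQ: "pos_word n P" "pos_word n Q" using cpl_pos[OF pd c] by auto
  have pZ3: "pos_word n Z3" using pe_pos[OF e1] "4.prems" by auto
  have nf1: "revf k U P \<noteq> NoFuel" using "4.prems"(1) c by (auto split: rres.splits)
  obtain A1 B1 Z4 where r1: "revf k U P = Ok A1 B1" and f1: "pos_eq n Z1 (A1@Z4)"
     and f2: "pos_eq n Z3 (B1@Z4)" and pZ4: "pos_word n Z4"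
    using "4.IH"(1)[OF c HOL.refl nf1, of Z1 Z3] "4.prems" e1 PQ pZ3 by auto
  have pB1: "pos_word n B1" using pe_pos[OF f2] pZ3 by simp
  have nf2: "revf k (Q@B1) V \<noteq> NoFuel" using "4.prems"(1) c r1 by (auto split: rres.splits)
  have e3: "pos_eq n ((Q@B1)@Z4) (V@Z2)"
    using pe_appL[OF f2, of Q] e2 by (metis append_assoc pe_sym pe_trans)
  have l3: "length ((Q@B1)@Z4) \<le> L" using pe_len[OF e3] pe_len[OF "4.prems"(4)] "4.prems"(5) by simp
  obtain A2 B2 Z where r2: "revf k (Q@B1) V = Ok A2 B2" and g1: "pos_eq n Z4 (A2@Z)"
     and g2: "pos_eq n Z2 (B2@Z)" and pZ: "pos_word n Z"
    using "4.IH"(2)[OF c HOL.refl r1 nf2 _ _ e3 l3] "4.prems" PQ pB1 pZ4 by auto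
  have "pos_eq n Z1 ((A1@A2)@Z)" using f1 pe_appL[OF g1, of A1] by (metis append_assoc pe_trans)
  then show ?case using r1 r2 c g2 pZ by auto
qed auto

definition cube_ok :: "letter \<Rightarrow> letter \<Rightarrow> letter \<Rightarrow> bool" where
  "cube_ok d e g = (case cpl d e of None \<Rightarrow> True | Some (P1,Q1) \<Rightarrow>
     (case cpl e g of None \<Rightarrow> True | Some (P2,Q2) \<Rightarrow>
       (case revf (Suc (Suc (Suc (Suc (Suc (Suc 0)))))) Q1 P2 of Fail \<Rightarrow> True | NoFuel \<Rightarrow> False | Ok A B \<Rightarrow>
         (case cpl d g of None \<Rightarrow> False | Some (P3,Q3) \<Rightarrow>
           (case revf (Suc (Suc (Suc (Suc (Suc (Suc 0)))))) P3 (P1@A) of Ok T B' \<Rightarrow> B' = [] \<and>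
               revf (Suc (Suc (Suc (Suc (Suc (Suc 0)))))) (Q3@T) (Q2@B) = Ok [] []
              | _ \<Rightarrow> False)))))"

lemma cube_SigSigSig: "cube_ok (Sig i) (Sig j) (Sig k)"
  by (cases "i = j"; cases "j = k"; cases "i = k"; cases "adj i j"; cases "adj j k"; cases "adj i k";
      simp add: cube_ok_def adj_sym; auto simp: adj_def)

lemma cube_SigSigX: "cube_ok (Sig i) (Sig j) (X k)"
  by (cases "i = j"; cases "j = k"; cases "i = k"; cases "adj i j"; cases "adj j k"; cases "adj i k";
      simp add: cube_ok_def adj_sym; auto simp: adj_def)

lemma cube_SigXSig: "cube_ok (Sig i) (X j) (Sig k)"
  by (cases "i = j"; cases "j = k"; cases "i = k"; cases "adj i j"; cases "adj j k"; cases "adj i k";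
      simp add: cube_ok_def adj_sym; auto simp: adj_def)

lemma cube_SigXX: "cube_ok (Sig i) (X j) (X k)"
  by (cases "i = j"; cases "j = k"; cases "i = k"; cases "adj i j"; cases "adj j k"; cases "adj i k";
      simp add: cube_ok_def adj_sym; auto simp: adj_def)

lemma cube_XSigSig: "cube_ok (X i) (Sig j) (Sig k)"
  by (cases "i = j"; cases "j = k"; cases "i = k"; cases "adj i j"; cases "adj j k"; cases "adj i k";
      simp add: cube_ok_def adj_sym; auto simp: adj_def)

lemma cube_XSigX: "cube_ok (X i) (Sig j) (X k)"
  by (cases "i = j"; cases "j = k"; cases "i = k"; cases "adj i j"; cases "adj j k"; cases "adj i k";
      simp add: cube_ok_def adj_sym; auto simp: adj_def)

lemma cube_XXSig: "cube_ok (X i) (X j) (Sig k)"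
  by (cases "i = j"; cases "j = k"; cases "i = k"; cases "adj i j"; cases "adj j k"; cases "adj i k";
      simp add: cube_ok_def adj_sym; auto simp: adj_def)

lemma cube_XXX: "cube_ok (X i) (X j) (X k)"
  by (cases "i = j"; cases "j = k"; cases "i = k"; cases "adj i j"; cases "adj j k"; cases "adj i k";
      simp add: cube_ok_def adj_sym; auto simp: adj_def)

lemma cube_all: "cube_ok d e g"
proof -
  have "cube_ok d e g" if "\<not> is_pos_letter d \<or> \<not> is_pos_letter e" 
    using that by (cases d; cases e) (auto simp: cube_ok_def)
  moreover have "cube_ok d e g" if "\<not> is_pos_letter g" "is_pos_letter e" 
    using that by (cases d; cases e; cases g) (auto simp: cube_ok_def split: option.splits rres.splits)
  moreover have "cube_ok d e g" if "is_pos_letter d" "is_pos_letter e" "is_pos_letter g"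
    using that by (cases d; cases e; cases g)
      (simp_all add: cube_SigSigSig cube_SigSigX cube_SigXSig cube_SigXX cube_XSigSig cube_XSigX cube_XXSig cube_XXX)
  ultimately show ?thesis by blast
qed



lemma Qtrans:
  assumes C: "\<And>l'. l' < l \<Longrightarrow> CANC n l'"
    and pd: "pos_word n [d]" "pos_word n [e]" "pos_word n [g]"
    and pX: "pos_word n Xw" and pY: "pos_word n Y" and pW: "pos_word n W" and lX: "length Xw = l"
    and c1: "cpl d e = Some (Pa,Qa)" and x1: "pos_eq n Xw (Pa@Za)" and y1: "pos_eq n Y (Qa@Za)"
    and c2: "cpl e g = Some (Pb,Qb)" and y2: "pos_eq n Y (Pb@Zb)" and w2: "pos_eq n W (Qb@Zb)"
  shows "\<exists>P Q Z. cpl d g = Some (P,Q) \<and> pos_eq n Xw (P@Z) \<and> pos_eq n W (Q@Z)"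
proof -
  have HPa: "pos_word n Pa" "pos_word n Qa" using cpl_pos[OF pd(1,2) c1] by auto
  have HPb: "pos_word n Pb" "pos_word n Qb" using cpl_pos[OF pd(2,3) c2] by auto
  have pZ1: "pos_word n Za" using pe_pos[OF x1] pX by simp
  have pZ2: "pos_word n Zb" using pe_pos[OF y2] pY by simp
  have e: "pos_eq n (Qa@Za) (Pb@Zb)" using y1 y2 by (meson pe_sym pe_trans)
  have lY': "length (Qa@Za) = length Y" using pe_len[OF y1] by simp
  have lXY: "length Xw = length Y"
  proof -
    have "length Xw = length (Pa@Za)" using pe_len[OF x1] .
    moreover have "length (d#Pa) = length (e#Qa)" using pe_len[OF cpl_sound[OF pd(1,2) c1]] .
    ultimately show ?thesis using lY' by simp
  qed
  have lY2: "length (Qa@Za) \<le> l" using lY' lXY lX by simp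
  define K where "K = Suc (Suc (Suc (Suc (Suc (Suc 0)))))"
  have cube: "cube_ok d e g" by (rule cube_all)
  have nf: "revf K Qa Pb \<noteq> NoFuel" using cube c1 c2 unfolding cube_ok_def K_def by auto
  obtain A B Z where r: "revf K Qa Pb = Ok A B" and z1: "pos_eq n Za (A@Z)" and z2: "pos_eq n Zb (B@Z)"
     and pZ: "pos_word n Z"
    using revf_complete[OF C nf _ _ e lY2] HPa HPb pZ1 pZ2 by auto
  have pA: "pos_word n A" using pe_pos[OF z1] pZ1 by simp
  have pB: "pos_word n B" using pe_pos[OF z2] pZ2 by simp
  obtain P3 Q3 where c3: "cpl d g = Some (P3,Q3)"
    using cube c1 c2 r unfolding cube_ok_def K_def[symmetric]
    by (auto split: option.splits rres.splits)
  obtain T B' where r2': "revf K P3 (Pa@A) = Ok T B'"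
    using cube c1 c2 r c3 unfolding cube_ok_def K_def[symmetric]
    by (auto split: option.splits rres.splits)
  have r2: "revf K P3 (Pa@A) = Ok T []" and r3: "revf K (Q3@T) (Qb@B) = Ok [] []"
    using cube c1 c2 r c3 r2' unfolding cube_ok_def K_def[symmetric] by auto
  have P3: "pos_word n P3" "pos_word n Q3" using cpl_pos[OF pd(1,3) c3] by auto
  have s2: "pos_eq n (P3@T) (Pa@A)" and pT: "pos_word n T"
    using revf_sound[OF r2] P3 HPa pA by auto
  have s3: "pos_eq n (Q3@T) (Qb@B)"
    using revf_sound[OF r3] P3 HPb pB pT by auto
  have "pos_eq n Xw (Pa@A@Z)" using x1 pe_appL[OF z1] pe_trans by blast
  also have "pos_eq n (Pa@A@Z) (P3@T@Z)" using pe_appR[OF pe_sym[OF s2], of Z] by simp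
  finally have XX: "pos_eq n Xw (P3@T@Z)" .
  have "pos_eq n W (Qb@B@Z)" using w2 pe_appL[OF z2] pe_trans by blast
  also have "pos_eq n (Qb@B@Z) (Q3@T@Z)" using pe_appR[OF pe_sym[OF s3], of Z] by simp
  finally have W: "pos_eq n W (Q3@T@Z)" .
  show ?thesis using c3 XX W by blast
qed

lemma cpl_rel: "(l,r) \<in> pos_rels n \<Longrightarrow> \<exists>d e l' r'. l = d#l' \<and> r = e#r' \<and> cpl d e = Some (l',r')"
  unfolding pos_rels_def by (auto simp: adj_def)

lemma canc_all: "CANC n l"
proof (induction l rule: less_induct)
  case (less l)
  define Qr where "Qr u v \<longleftrightarrow> (\<exists>d Xw e Y P Q Z. u = d#Xw \<and> v = e#Y \<and> cpl d e = Some (P,Q)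
        \<and> pos_eq n Xw (P@Z) \<and> pos_eq n Y (Q@Z))" for u v
  have key: "pos_word n u \<Longrightarrow> length u = Suc l \<Longrightarrow> Qr u v" if cg: "cong_gen (pos_rels n) u v" for u v
    using cg
  proof (induction rule: cong_gen.induct)
    case (refl u)
    then obtain d Xw where "u = d#Xw" by (cases u) auto
    moreover have "cpl d d = Some ([],[])" using refl \<open>u = d#Xw\<close> by (auto intro: cpl_self)
    ultimately have "u = d#Xw \<and> u = d#Xw \<and> cpl d d = Some ([],[]) \<and> pos_eq n Xw ([]@Xw) \<and> pos_eq n Xw ([]@Xw)"
      by simp
    then show ?case unfolding Qr_def by blast
  next
    case (sym u v)
    have pe: "pos_eq n u v" using sym(1) unfolding pos_eq_def .
    have "Qr u v" using sym pe_pos[OF pe] pe_len[OF pe] by simp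
    then obtain d Xw e Y P Q Z where "u = d#Xw" "v = e#Y" "cpl d e = Some (P,Q)"
        "pos_eq n Xw (P@Z)" "pos_eq n Y (Q@Z)" unfolding Qr_def by blast
    moreover have "cpl e d = Some (Q,P)" using cpl_swap \<open>cpl d e = Some (P,Q)\<close> by blast
    ultimately have "v = e#Y \<and> u = d#Xw \<and> cpl e d = Some (Q,P) \<and> pos_eq n Y (Q@Z) \<and> pos_eq n Xw (P@Z)"
      by blast
    then show ?case unfolding Qr_def by blast
  next
    case (trans u v w)
    have pe: "pos_eq n u v" using trans(1) unfolding pos_eq_def .
    have q1: "Qr u v" using trans by simp
    have q2: "Qr v w" using trans pe_pos[OF pe] pe_len[OF pe] by simp
    have pe2: "pos_eq n v w" using trans(2) unfolding pos_eq_def .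
    obtain d Xw e Y P1 Q1 Z1 where u: "u = d#Xw" and v: "v = e#Y" and c1: "cpl d e = Some (P1,Q1)"
      and x1: "pos_eq n Xw (P1@Z1)" and y1: "pos_eq n Y (Q1@Z1)" using q1 unfolding Qr_def by blast
    obtain e' Y' g W P2 Q2 Z2 where v': "v = e'#Y'" and w: "w = g#W" and c2: "cpl e' g = Some (P2,Q2)"
      and y2: "pos_eq n Y' (P2@Z2)" and w2: "pos_eq n W (Q2@Z2)" using q2 unfolding Qr_def by blast
    have ee: "e' = e" "Y' = Y" using v v' by auto
    have pv: "pos_word n v" using pe_pos[OF pe] trans by simp
    have pw: "pos_word n w" using pe_pos[OF pe2] pv by simp
    have "\<exists>P Q Z. cpl d g = Some (P,Q) \<and> pos_eq n Xw (P@Z) \<and> pos_eq n W (Q@Z)"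
      using Qtrans[where d=d and e=e and g=g and Xw=Xw and Y=Y and W=W and Pa=P1 and Qa=Q1 and Za=Z1 and Pb=P2 and Qb=Q2 and Zb=Z2 and n=n and l=l, OF less.IH] trans(5,6) pv pw u v w c1 x1 y1 c2 y2 w2 ee
      by auto
    then obtain P Q Z where "cpl d g = Some (P,Q)" "pos_eq n Xw (P@Z)" "pos_eq n W (Q@Z)" by blast
    then have "u = d#Xw \<and> w = g#W \<and> cpl d g = Some (P,Q) \<and> pos_eq n Xw (P@Z) \<and> pos_eq n W (Q@Z)"
      using u w by blast
    then show ?case unfolding Qr_def by blast
  next
    case (rel l' r' a b)
    show ?case
    proof (cases a)
      case Nil
      obtain d e l'' r'' where "l' = d#l''" "r' = e#r''" "cpl d e = Some (l'',r'')" using cpl_rel[OF rel(1)] by blast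
      then have "a@l'@b = d#(l''@b) \<and> a@r'@b = e#(r''@b) \<and> cpl d e = Some (l'',r'') \<and> pos_eq n (l''@b) (l''@b) \<and> pos_eq n (r''@b) (r''@b)"
        using Nil by simp
      then show ?thesis unfolding Qr_def by blast
    next
      case (Cons c a')
      have "pos_eq n (a'@l'@b) (a'@r'@b)" using pe_app[OF pe_rel[OF rel(1)]] .
      moreover have "cpl c c = Some ([],[])" using rel Cons by (auto intro: cpl_self)
      ultimately have "a@l'@b = c#(a'@l'@b) \<and> a@r'@b = c#(a'@r'@b) \<and> cpl c c = Some ([],[]) \<and> pos_eq n (a'@l'@b) ([]@(a'@r'@b)) \<and> pos_eq n (a'@r'@b) ([]@(a'@r'@b))"
        using Cons by simp
      then show ?thesis unfolding Qr_def by blast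
    qed
  qed
  show ?case unfolding CANC_def
  proof (intro allI impI)
    fix d e Xw Y assume h: "pos_word n (d#Xw)" "pos_word n (e#Y)" "length Xw = l" "pos_eq n (d#Xw) (e#Y)"
    have "Qr (d#Xw) (e#Y)" using key[of "d#Xw" "e#Y"] h unfolding pos_eq_def by auto
    then show "\<exists>P Q Z. cpl d e = Some (P,Q) \<and> pos_eq n Xw (P@Z) \<and> pos_eq n Y (Q@Z)"
      unfolding Qr_def by auto
  qed
qed

lemma cancel_letter: "pos_word n (d#Xw) \<Longrightarrow> pos_word n (d#Y) \<Longrightarrow> pos_eq n (d#Xw) (d#Y) \<Longrightarrow> pos_eq n Xw Y"
proof -
  assume h: "pos_word n (d#Xw)" "pos_word n (d#Y)" "pos_eq n (d#Xw) (d#Y)"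
  obtain P Q Z where "cpl d d = Some (P,Q)" "pos_eq n Xw (P@Z)" "pos_eq n Y (Q@Z)"
    using canc_all[of n "length Xw"] h unfolding CANC_def by blast
  moreover have "cpl d d = Some ([],[])" using h by (auto intro: cpl_self)
  ultimately show ?thesis by (auto intro: pe_sym pe_trans)
qed

lemma cancel_left: "pos_word n (U@Xw) \<Longrightarrow> pos_word n (U@Y) \<Longrightarrow> pos_eq n (U@Xw) (U@Y) \<Longrightarrow> pos_eq n Xw Y"
proof (induction U)
  case (Cons a U) then show ?case using cancel_letter[of n a "U@Xw" "U@Y"] by simp
qed simp



lemma pos_rels_rev: "(l,r) \<in> pos_rels n \<Longrightarrow> (rev l, rev r) \<in> pos_rels n \<or> (rev r, rev l) \<in> pos_rels n"
  unfolding pos_rels_def by auto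

lemma pe_rev: "pos_eq n u v \<Longrightarrow> pos_eq n (rev u) (rev v)"
  unfolding pos_eq_def
proof (induction rule: cong_gen.induct)
  case (refl u) then show ?case by (rule cong_gen.refl)
next
  case (sym u v) then show ?case by (blast intro: cong_gen.sym)
next
  case (trans u v w) then show ?case by (metis cong_gen.trans)
next
  case (rel l r a b)
  have "pos_eq n (rev l) (rev r)" using pos_rels_rev[OF rel] pe_rel pe_rel' by blast
  then have "pos_eq n (rev b @ rev l @ rev a) (rev b @ rev r @ rev a)" by (rule pe_app)
  then show ?case unfolding pos_eq_def by simp
qed

lemma cancel_right: "pos_word n (Xw@U) \<Longrightarrow> pos_word n (Y@U) \<Longrightarrow> pos_eq n (Xw@U) (Y@U) \<Longrightarrow> pos_eq n Xw Y"
proof -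
  assume h: "pos_word n (Xw@U)" "pos_word n (Y@U)" "pos_eq n (Xw@U) (Y@U)"
  have "pos_eq n (rev U @ rev Xw) (rev U @ rev Y)" using pe_rev[OF h(3)] by simp
  moreover have "pos_word n (rev U @ rev Xw)" "pos_word n (rev U @ rev Y)" using h(1,2)
    unfolding pos_word_def by auto
  ultimately have "pos_eq n (rev Xw) (rev Y)" using cancel_left by blast
  then show ?thesis using pe_rev by fastforce
qed

fun lm :: "(nat \<Rightarrow> nat) \<Rightarrow> letter \<Rightarrow> letter" where
  "lm f (Sig i) = Sig (f i)" | "lm f (SigInv i) = SigInv (f i)" | "lm f (X i) = X (f i)"

definition mk :: "bool \<Rightarrow> nat \<Rightarrow> letter" where
  "mk b j = (if b then Sig j else X j)"

lemma mk_cases: "is_pos_letter a \<Longrightarrow> \<exists>b. a = mk b (letter_idx a)"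
  by (cases a) (auto simp: mk_def)

lemma mk_simps[simp]: "is_pos_letter (mk b j)" "letter_idx (mk b j) = j" "lm f (mk b j) = mk b (f j)"
  by (auto simp: mk_def)

lemma com_S: "idx_ok n j \<Longrightarrow> idx_ok n t \<Longrightarrow> t + 1 < j \<or> j + 1 < t \<Longrightarrow>
   pos_eq n [mk b j, Sig t] [Sig t, mk b j]"
proof (cases b)
  case True
  assume "idx_ok n j" "idx_ok n t" "t + 1 < j \<or> j + 1 < t"
  then have "([Sig j, Sig t], [Sig t, Sig j]) \<in> pos_rels n"
    unfolding pos_rels_def by (intro UnI1) auto
  then show ?thesis using True by (simp add: mk_def pe_rel)
next
  case False
  assume "idx_ok n j" "idx_ok n t" "t + 1 < j \<or> j + 1 < t"
  then have "([X j, Sig t], [Sig t, X j]) \<in> pos_rels n"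
    unfolding pos_rels_def by (intro UnI1 UnI2) auto
  then show ?thesis using False by (simp add: mk_def pe_rel)
qed

lemma braid_rel: "idx_ok n i \<Longrightarrow> idx_ok n (Suc i) \<Longrightarrow> pos_eq n [Sig i, Sig (Suc i), Sig i] [Sig (Suc i), Sig i, Sig (Suc i)]"
  by (rule pe_rel) (unfold pos_rels_def, intro UnI1 UnI2, auto)
lemma rel5: "idx_ok n i \<Longrightarrow> idx_ok n (Suc i) \<Longrightarrow> pos_eq n [Sig i, Sig (Suc i), X i] [X (Suc i), Sig i, Sig (Suc i)]"
  by (rule pe_rel) (unfold pos_rels_def, intro UnI1 UnI2, auto)
lemma rel6: "idx_ok n i \<Longrightarrow> idx_ok n (Suc i) \<Longrightarrow> pos_eq n [Sig (Suc i), Sig i, X (Suc i)] [X i, Sig (Suc i), Sig i]"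
  by (rule pe_rel) (unfold pos_rels_def, intro UnI2, auto)

lemma comm_word: "(\<And>a. a \<in> set W \<Longrightarrow> pos_eq n [c, a] [a, c]) \<Longrightarrow> pos_eq n (c#W) (W@[c])"
proof (induction W)
  case (Cons a W)
  have "pos_eq n (c#a#W) (a#c#W)" using pe_appR[OF Cons.prems[of a], of W] by simp
  also have "pos_eq n (a#c#W) (a#W@[c])" using Cons by (auto intro: pe_cons)
  finally show ?case by simp
qed simp

definition Pi :: "nat \<Rightarrow> word" where "Pi m = map Sig [1..<Suc m]"
definition Pi' :: "nat \<Rightarrow> word" where "Pi' m = map Sig (rev [1..<Suc m])"
definition D :: "nat \<Rightarrow> word" where "D m = concat (map (\<lambda>k. map Sig [1..<k+1]) (rev [1..<Suc m]))"

lemma D_0[simp]: "D 0 = []" by (simp add: D_def)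
lemma D_Suc: "D (Suc m) = Pi (Suc m) @ D m" by (simp add: D_def Pi_def)
lemma Pi_Suc: "Pi (Suc m) = Pi m @ [Sig (Suc m)]" by (simp add: Pi_def)
lemma Pi'_Suc: "Pi' (Suc m) = Sig (Suc m) # Pi' m" by (simp add: Pi'_def)
lemma delta_D: "n \<ge> 1 \<Longrightarrow> delta n = D (n-1)" by (simp add: delta_def D_def)

lemma set_Pi: "a \<in> set (Pi m) \<Longrightarrow> \<exists>t. a = Sig t \<and> 1 \<le> t \<and> t \<le> m" by (auto simp: Pi_def)
lemma set_Pi': "a \<in> set (Pi' m) \<Longrightarrow> \<exists>t. a = Sig t \<and> 1 \<le> t \<and> t \<le> m" by (auto simp: Pi'_def)
lemma set_D: "a \<in> set (D m) \<Longrightarrow> \<exists>t. a = Sig t \<and> 1 \<le> t \<and> t \<le> m" by (auto simp: D_def)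

lemma pos_D: "m < n \<Longrightarrow> pos_word n (D m)"
  unfolding pos_word_def by (auto dest!: set_D simp: idx_ok_def)
lemma pos_Pi: "m < n \<Longrightarrow> pos_word n (Pi m)"
  unfolding pos_word_def by (auto dest!: set_Pi simp: idx_ok_def)
lemma pos_Pi': "m < n \<Longrightarrow> pos_word n (Pi' m)"
  unfolding pos_word_def by (auto dest!: set_Pi' simp: idx_ok_def)

lemma comm_sigs: "(\<And>a. a \<in> set W \<Longrightarrow> \<exists>t. a = Sig t \<and> idx_ok n t \<and> (t + 1 < j \<or> j + 1 < t)) \<Longrightarrow> idx_ok n j \<Longrightarrow>
   pos_eq n (mk b j # W) (W @ [mk b j])"
proof (rule comm_word)
  fix a assume h: "\<And>a. a \<in> set W \<Longrightarrow> \<exists>t. a = Sig t \<and> idx_ok n t \<and> (t + 1 < j \<or> j + 1 < t)" "idx_ok n j" "a \<in> set W"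
  then obtain t where "a = Sig t" "idx_ok n t" "t + 1 < j \<or> j + 1 < t" by blast
  then show "pos_eq n [mk b j, a] [a, mk b j]" using com_S[OF h(2)] by blast
qed

lemma upt_split3: "i \<le> j \<Longrightarrow> j \<le> k \<Longrightarrow> [i..<k] = [i..<j] @ [j..<k]"
  by (metis le_add_diff_inverse upt_add_eq_append)

lemma Pi_split: "1 \<le> j \<Longrightarrow> j < m \<Longrightarrow> Pi m = map Sig [1..<j] @ [Sig j, Sig (Suc j)] @ map Sig [Suc (Suc j)..<Suc m]"
proof -
  assume h: "1 \<le> j" "j < m"
  have "[1..<Suc m] = [1..<j] @ [j..<Suc m]" using h by (intro upt_split3) auto
  also have "[j..<Suc m] = j # Suc j # [Suc (Suc j)..<Suc m]" using h by (simp add: upt_conv_Cons)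
  finally show ?thesis by (simp add: Pi_def)
qed

lemma Pi_shift:
  assumes "1 \<le> j" "j < m" "m < n"
  shows "pos_eq n (Pi m @ [mk b j]) (mk b (Suc j) # Pi m)"
proof -
  let ?A = "map Sig [1..<j]" and ?B = "map Sig [Suc (Suc j)..<Suc m]"
  have "pos_eq n (?B @ [mk b j]) (mk b j # ?B)"
    by (rule pe_sym, rule comm_sigs) (use assms in \<open>auto simp: idx_ok_def\<close>)
  then have "pos_eq n (?A @ [Sig j, Sig (Suc j)] @ ?B @ [mk b j]) (?A @ [Sig j, Sig (Suc j)] @ mk b j # ?B)"
    using pe_appL[of n _ _ "?A @ [Sig j, Sig (Suc j)]"] by simp
  also have "pos_eq n (?A @ [Sig j, Sig (Suc j)] @ mk b j # ?B) (?A @ [mk b (Suc j), Sig j, Sig (Suc j)] @ ?B)"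
  proof -
    have rr: "pos_eq n [Sig j, Sig (Suc j), mk b j] [mk b (Suc j), Sig j, Sig (Suc j)]"
      using assms braid_rel[of n j] rel5[of n j] by (cases b) (auto simp: mk_def idx_ok_def)
    show ?thesis using pe_app[OF rr, of ?A ?B] by (simp del: upt_Suc)
  qed
  also have "pos_eq n (?A @ [mk b (Suc j), Sig j, Sig (Suc j)] @ ?B) (mk b (Suc j) # ?A @ [Sig j, Sig (Suc j)] @ ?B)"
  proof -
    have rr: "pos_eq n (mk b (Suc j) # ?A) (?A @ [mk b (Suc j)])"
      by (rule comm_sigs) (use assms in \<open>auto simp: idx_ok_def\<close>)
    show ?thesis using pe_appR[OF pe_sym[OF rr], of "[Sig j, Sig (Suc j)] @ ?B"] by (simp del: upt_Suc)
  qed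
  finally show ?thesis using Pi_split[OF assms(1,2)] by simp
qed

lemma Pi'_split: "Suc (Suc k) \<le> m \<Longrightarrow> Pi' m = map Sig (rev [Suc (Suc (Suc k))..<Suc m]) @ [Sig (Suc (Suc k)), Sig (Suc k)] @ map Sig (rev [1..<Suc k])"
proof -
  assume h: "Suc (Suc k) \<le> m"
  have "[1..<Suc m] = [1..<Suc k] @ [Suc k..<Suc m]" using h by (intro upt_split3) auto
  also have "[Suc k..<Suc m] = Suc k # Suc (Suc k) # [Suc (Suc (Suc k))..<Suc m]" using h by (simp add: upt_conv_Cons)
  finally show ?thesis by (simp add: Pi'_def)
qed

lemma Pi'_shift:
  assumes "Suc (Suc k) \<le> m" "m < n"
  shows "pos_eq n (Pi' m @ [mk b (Suc (Suc k))]) (mk b (Suc k) # Pi' m)"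
proof -
  let ?B = "map Sig (rev [1..<Suc k])" and ?A = "map Sig (rev [Suc (Suc (Suc k))..<Suc m])"
  have "pos_eq n (?B @ [mk b (Suc (Suc k))]) (mk b (Suc (Suc k)) # ?B)"
    by (rule pe_sym, rule comm_sigs) (use assms in \<open>auto simp: idx_ok_def\<close>)
  then have "pos_eq n (?A @ [Sig (Suc (Suc k)), Sig (Suc k)] @ ?B @ [mk b (Suc (Suc k))]) (?A @ [Sig (Suc (Suc k)), Sig (Suc k)] @ mk b (Suc (Suc k)) # ?B)"
    using pe_appL[of n _ _ "?A @ [Sig (Suc (Suc k)), Sig (Suc k)]"] by simp
  also have "pos_eq n (?A @ [Sig (Suc (Suc k)), Sig (Suc k)] @ mk b (Suc (Suc k)) # ?B) (?A @ [mk b (Suc k), Sig (Suc (Suc k)), Sig (Suc k)] @ ?B)"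
  proof -
    have rr: "pos_eq n [Sig (Suc (Suc k)), Sig (Suc k), mk b (Suc (Suc k))] [mk b (Suc k), Sig (Suc (Suc k)), Sig (Suc k)]"
      using assms braid_rel[of n "Suc k"] rel6[of n "Suc k"] by (cases b) (auto simp: mk_def idx_ok_def intro: pe_sym)
    show ?thesis using pe_app[OF rr, of ?A ?B] by (simp del: upt_Suc)
  qed
  also have "pos_eq n (?A @ [mk b (Suc k), Sig (Suc (Suc k)), Sig (Suc k)] @ ?B) (mk b (Suc k) # ?A @ [Sig (Suc (Suc k)), Sig (Suc k)] @ ?B)"
  proof -
    have rr: "pos_eq n (mk b (Suc k) # ?A) (?A @ [mk b (Suc k)])"
      by (rule comm_sigs) (use assms in \<open>auto simp: idx_ok_def\<close>)
    show ?thesis using pe_appR[OF pe_sym[OF rr], of "[Sig (Suc (Suc k)), Sig (Suc k)] @ ?B"] by (simp del: upt_Suc)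
  qed
  finally show ?thesis using Pi'_split[OF assms(1)] by simp
qed



definition bw :: "nat \<Rightarrow> word \<Rightarrow> bool" where
  "bw m W \<longleftrightarrow> (\<forall>a\<in>set W. is_pos_letter a \<and> 1 \<le> letter_idx a \<and> letter_idx a \<le> m)"

lemma bw_simps[simp]: "bw m []" "bw m (a#W) = (is_pos_letter a \<and> 1 \<le> letter_idx a \<and> letter_idx a \<le> m \<and> bw m W)"
  "bw m (U@W) = (bw m U \<and> bw m W)"
  unfolding bw_def by auto

lemma bw_pos: "bw m W \<Longrightarrow> m < n \<Longrightarrow> pos_word n W"
  unfolding bw_def pos_word_def idx_ok_def by auto

lemma pos_bw: "pos_word n W \<Longrightarrow> bw (n-1) W"
  unfolding bw_def pos_word_def idx_ok_def by auto

lemma bw_mono: "bw m W \<Longrightarrow> m \<le> m' \<Longrightarrow> bw m' W"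
  unfolding bw_def by auto

lemma rel_idx: "(l,r) \<in> pos_rels n \<Longrightarrow> bw m l = bw m r"
  unfolding pos_rels_def bw_def by auto

lemma pe_bw: "pos_eq n u v \<Longrightarrow> bw m u = bw m v"
  unfolding pos_eq_def
  by (induction rule: cong_gen.induct) (auto dest: rel_idx[where m=m])

abbreviation flip :: "nat \<Rightarrow> letter \<Rightarrow> letter" where
  "flip m \<equiv> lm (\<lambda>i. Suc m - i)"

lemma flip_rel: "(l,r) \<in> pos_rels n \<Longrightarrow> bw m l \<Longrightarrow> m < n \<Longrightarrow>
   (map (flip m) l, map (flip m) r) \<in> pos_rels n \<or>
   (map (flip m) r, map (flip m) l) \<in> pos_rels n"
  unfolding pos_rels_def bw_def idx_ok_def
  by (elim UnE) auto

lemma flip_pe: "pos_eq n u v \<Longrightarrow> bw m u \<Longrightarrow> m < n \<Longrightarrow> pos_eq n (map (flip m) u) (map (flip m) v)"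
  unfolding pos_eq_def
proof (induction rule: cong_gen.induct)
  case (refl u) show ?case by (rule cong_gen.refl)
next
  case (sym u v)
  then have "bw m u" using pe_bw[of n u v m] unfolding pos_eq_def by simp
  then show ?case using sym by (blast intro: cong_gen.sym)
next
  case (trans u v w)
  then have "bw m v" using pe_bw[of n u v m] unfolding pos_eq_def by simp
  then show ?case using trans by (metis cong_gen.trans)
next
  case (rel l r a b)
  have bl: "bw m l" using rel(2) by simp
  have "(map (flip m) l, map (flip m) r) \<in> pos_rels n \<or> (map (flip m) r, map (flip m) l) \<in> pos_rels n"
    using flip_rel[OF rel(1) bl rel(3)] .
  then have "pos_eq n (map (flip m) l) (map (flip m) r)" using pe_rel pe_rel' by blast
  then have "pos_eq n (map (flip m) a @ map (flip m) l @ map (flip m) b) (map (flip m) a @ map (flip m) r @ map (flip m) b)"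
    by (rule pe_app)
  then show ?case unfolding pos_eq_def by simp
qed

lemma flip_bw: "bw m W \<Longrightarrow> bw m (map (flip m) W)"
  unfolding bw_def by (auto elim!: lm.elims is_pos_letter.elims)

lemma flip_flip: "bw m W \<Longrightarrow> map (flip m) (map (flip m) W) = W"
  unfolding bw_def by (induction W) (auto elim!: lm.elims is_pos_letter.elims)

lemma flip_mk: "flip m (mk b j) = mk b (Suc m - j)" by simp

lemma bw_D: "bw m (D m)" unfolding bw_def by (auto dest!: set_D)
lemma bw_Pi: "bw m (Pi m)" unfolding bw_def by (auto dest!: set_Pi)
lemma bw_Pi': "bw m (Pi' m)" unfolding bw_def by (auto dest!: set_Pi')

lemma com_same: "idx_ok n j \<Longrightarrow> pos_eq n [mk b j, Sig j] [Sig j, mk b j]"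
proof (cases b)
  case False
  assume "idx_ok n j"
  then have "([X j, Sig j], [Sig j, X j]) \<in> pos_rels n"
    unfolding pos_rels_def by (intro UnI1 UnI2) auto
  then show ?thesis using False by (simp add: mk_def pe_rel)
qed (simp add: mk_def)

lemma D_Pi': "Suc m < n \<Longrightarrow> pos_eq n (D (Suc m)) (D m @ Pi' (Suc m))"
proof (induction m)
  case 0 then show ?case by (simp add: D_Suc Pi_def Pi'_def)
next
  case (Suc m)
  have "pos_eq n (D (Suc (Suc m))) (Pi (Suc (Suc m)) @ D m @ Pi' (Suc m))"
    unfolding D_Suc[of "Suc m"] using Suc by (auto intro: pe_appL)
  also have "pos_eq n (Pi (Suc (Suc m)) @ D m @ Pi' (Suc m)) (Pi (Suc m) @ D m @ [Sig (Suc (Suc m))] @ Pi' (Suc m))"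
  proof -
    have "pos_eq n (mk True (Suc (Suc m)) # D m) (D m @ [mk True (Suc (Suc m))])"
      by (rule comm_sigs) (use Suc.prems in \<open>auto dest!: set_D simp: idx_ok_def\<close>)
    then have cc: "pos_eq n (Sig (Suc (Suc m)) # D m) (D m @ [Sig (Suc (Suc m))])" by (simp add: mk_def)
    show ?thesis using pe_app[OF cc, of "Pi (Suc m)" "Pi' (Suc m)"] by (simp add: Pi_Suc)
  qed
  also have "Pi (Suc m) @ D m @ [Sig (Suc (Suc m))] @ Pi' (Suc m) = D (Suc m) @ Pi' (Suc (Suc m))"
    by (simp add: D_Suc Pi'_Suc)
  finally show ?case .
qed

lemma D_conj: "m < n \<Longrightarrow> 1 \<le> j \<Longrightarrow> j \<le> m \<Longrightarrow> pos_eq n (D m @ [mk b j]) (mk b (Suc m - j) # D m)"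
proof (induction m arbitrary: j)
  case 0 then show ?case by simp
next
  case (Suc m)
  show ?case
  proof (cases "j \<le> m")
    case True
    have "pos_eq n (D (Suc m) @ [mk b j]) (Pi (Suc m) @ mk b (Suc m - j) # D m)"
      unfolding D_Suc using Suc.IH[of j] Suc.prems True pe_appL[of n _ _ "Pi (Suc m)"] by simp
    also have "pos_eq n (Pi (Suc m) @ mk b (Suc m - j) # D m) (mk b (Suc (Suc m - j)) # Pi (Suc m) @ D m)"
    proof -
      have "pos_eq n (Pi (Suc m) @ [mk b (Suc m - j)]) (mk b (Suc (Suc m - j)) # Pi (Suc m))"
        using Pi_shift[of "Suc m - j" "Suc m" n b] Suc.prems True by simp
      from pe_appR[OF this, of "D m"] show ?thesis by simp
    qed
    finally show ?thesis using True by (simp add: D_Suc Suc_diff_le)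
  next
    case False
    then have j: "j = Suc m" using Suc.prems by simp
    show ?thesis
    proof (cases m)
      case 0
      have "pos_eq n [Sig 1, mk b 1] [mk b 1, Sig 1]" using com_same[of n 1 b] Suc.prems
        by (auto simp: idx_ok_def intro: pe_sym)
      then show ?thesis using j 0 by (simp add: D_Suc Pi_def)
    next
      case (Suc m')
      have "pos_eq n (D (Suc m) @ [mk b j]) (D m @ Pi' (Suc m) @ [mk b (Suc m)])"
        using D_Pi'[of m n] "Suc.prems" j pe_appR by fastforce
      also have "pos_eq n (D m @ Pi' (Suc m) @ [mk b (Suc m)]) (D m @ [mk b m] @ Pi' (Suc m))"
        using Pi'_shift[of m' "Suc m" n b] Suc "Suc.prems" pe_appL[of n _ _ "D m"] by simp
      also have "pos_eq n (D m @ [mk b m] @ Pi' (Suc m)) (mk b 1 # D m @ Pi' (Suc m))"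
      proof -
        have "pos_eq n (D m @ [mk b m]) (mk b 1 # D m)" using "Suc.IH"[of m] "Suc.prems" Suc by simp
        from pe_appR[OF this, of "Pi' (Suc m)"] show ?thesis by simp
      qed
      also have "pos_eq n (mk b 1 # D m @ Pi' (Suc m)) (mk b 1 # D (Suc m))"
        using D_Pi'[of m n] "Suc.prems" by (auto intro: pe_cons pe_sym)
      finally show ?thesis using j by simp
    qed
  qed
qed

lemma D_conj_word: "m < n \<Longrightarrow> bw m W \<Longrightarrow> pos_eq n (D m @ W) (map (flip m) W @ D m)"
proof (induction W)
  case (Cons a W)
  obtain b where a: "a = mk b (letter_idx a)" using mk_cases Cons.prems by auto
  have "pos_eq n (D m @ [a]) (flip m a # D m)"
    using D_conj[of m n "letter_idx a" b] Cons.prems a by (metis bw_simps(2) flip_mk)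
  then have "pos_eq n (D m @ a # W) (flip m a # D m @ W)" using pe_appR[of n _ _ W] by fastforce
  also have "pos_eq n (flip m a # D m @ W) (flip m a # map (flip m) W @ D m)"
    using Cons by (auto intro: pe_cons)
  finally show ?case by simp
qed simp

lemma D_flip: "m < n \<Longrightarrow> pos_eq n (map (flip m) (D m)) (D m)"
proof -
  assume m: "m < n"
  have "pos_eq n (D m @ map (flip m) (D m)) (map (flip m) (map (flip m) (D m)) @ D m)"
    using D_conj_word[OF m flip_bw[OF bw_D]] .
  then have "pos_eq n (D m @ map (flip m) (D m)) (D m @ D m)" using flip_flip[OF bw_D] by simp
  moreover have "pos_word n (D m @ map (flip m) (D m))" "pos_word n (D m @ D m)"
    using bw_pos[OF _ m] bw_D flip_bw[OF bw_D] by auto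
  ultimately show ?thesis using cancel_left by blast
qed

lemma D_rdiv: "m < n \<Longrightarrow> 1 \<le> j \<Longrightarrow> j \<le> m \<Longrightarrow> \<exists>R. bw m R \<and> pos_eq n (R @ [Sig j]) (D m)"
proof (induction m arbitrary: j)
  case 0 then show ?case by simp
next
  case (Suc m)
  show ?case
  proof (cases "j \<le> m")
    case True
    obtain R where R: "bw m R" "pos_eq n (R @ [Sig j]) (D m)" using Suc True by auto
    have "pos_eq n ((Pi (Suc m) @ R) @ [Sig j]) (D (Suc m))" using pe_appL[OF R(2), of "Pi (Suc m)"]
      by (simp add: D_Suc)
    moreover have "bw (Suc m) (Pi (Suc m) @ R)" using bw_Pi R(1) bw_mono by auto
    ultimately show ?thesis by blast
  next
    case False
    then have j: "j = Suc m" using Suc.prems by simp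
    define S where "S = D m @ map Sig (rev [Suc (Suc 0)..<Suc (Suc m)])"
    have Pe: "Pi' (Suc m) = map Sig (rev [Suc (Suc 0)..<Suc (Suc m)]) @ [Sig 1]"
      unfolding Pi'_def by (simp add: upt_conv_Cons del: upt_Suc)
    have e1: "pos_eq n (S @ [Sig 1]) (D (Suc m))" using D_Pi'[of m n] Suc.prems Pe
      by (auto simp: S_def intro: pe_sym)
    have bS: "bw (Suc m) (S @ [Sig 1])" using pe_bw[OF e1, of "Suc m"] bw_D[of "Suc m"] by simp
    have "pos_eq n (map (flip (Suc m)) (S @ [Sig 1])) (map (flip (Suc m)) (D (Suc m)))"
      using flip_pe[OF e1 bS Suc.prems(1)] .
    also have "pos_eq n (map (flip (Suc m)) (D (Suc m))) (D (Suc m))" using D_flip Suc.prems by simp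
    finally have "pos_eq n (map (flip (Suc m)) S @ [Sig (Suc m)]) (D (Suc m))" by simp
    moreover have "bw (Suc m) (map (flip (Suc m)) S)" using flip_bw[of "Suc m" S] bS by simp
    ultimately show ?thesis using j by blast
  qed
qed



abbreviation tau :: "nat \<Rightarrow> letter \<Rightarrow> letter" where "tau n \<equiv> flip (n-1)"

lemma pos_bw_iff: "1 \<le> n \<Longrightarrow> pos_word n W = bw (n-1) W"
  unfolding pos_word_def bw_def idx_ok_def by auto

lemma nm1: "1 \<le> (n::nat) \<Longrightarrow> n - 1 < n" by arith

lemma pos_delta: "1 \<le> n \<Longrightarrow> pos_word n (delta n)"
proof -
  assume n: "1 \<le> n"
  show ?thesis using delta_D[OF n] pos_D[OF nm1[OF n]] by simp
qed

lemma delta_conj: "1 \<le> n \<Longrightarrow> pos_word n W \<Longrightarrow> pos_eq n (delta n @ W) (map (tau n) W @ delta n)"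
proof -
  assume n: "1 \<le> n" and W: "pos_word n W"
  show ?thesis using D_conj_word[OF nm1[OF n] pos_bw[OF W]] delta_D[OF n] by simp
qed

lemma tau_pe: "1 \<le> n \<Longrightarrow> pos_eq n u v \<Longrightarrow> pos_word n u \<Longrightarrow> pos_eq n (map (tau n) u) (map (tau n) v)"
  using flip_pe[OF _ pos_bw nm1] by blast

lemma tau_pos: "1 \<le> n \<Longrightarrow> pos_word n W \<Longrightarrow> pos_word n (map (tau n) W)"
  using bw_pos[OF flip_bw[OF pos_bw] nm1] by blast

lemma tau_tau: "1 \<le> n \<Longrightarrow> pos_word n W \<Longrightarrow> map (tau n) (map (tau n) W) = W"
  using flip_flip[OF pos_bw] by blast

lemma delta_tau: "1 \<le> n \<Longrightarrow> pos_eq n (map (tau n) (delta n)) (delta n)"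
  using D_flip[of "n-1" n] delta_D by simp

lemma tau_Sig: "1 \<le> n \<Longrightarrow> tau n (Sig i) = Sig (n - i)" by simp

lemma delta_R: "2 \<le> n \<Longrightarrow> idx_ok n i \<Longrightarrow>
   \<exists>R. pos_word n R \<and> pos_eq n (R @ [Sig i]) (delta n) \<and> pos_eq n (Sig (n-i) # R) (delta n)"
proof -
  assume n: "2 \<le> n" and i: "idx_ok n i"
  obtain R where R: "bw (n-1) R" "pos_eq n (R @ [Sig i]) (D (n-1))"
    using D_rdiv[of "n-1" n i] n i by (auto simp: idx_ok_def)
  have pR: "pos_word n R" using bw_pos[OF R(1)] n by simp
  have e1: "pos_eq n (R @ [Sig i]) (delta n)" using R(2) delta_D n by simp
  have "pos_eq n ((Sig (n-i) # R) @ [Sig i]) (Sig (n-i) # delta n)" using pe_cons[OF e1] by simp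
  also have "pos_eq n (Sig (n-i) # delta n) (delta n @ [Sig i])"
    using pe_sym[OF delta_conj[of n "[Sig i]"]] n i by (simp add: idx_ok_def)
  finally have ee: "pos_eq n ((Sig (n-i) # R) @ [Sig i]) (delta n @ [Sig i])" .
  have p1: "pos_word n ((Sig (n-i) # R) @ [Sig i])" using pR i n by (auto simp: idx_ok_def)
  have p2: "pos_word n (delta n @ [Sig i])" using i pos_delta n by (auto simp: idx_ok_def)
  have "pos_eq n (Sig (n-i) # R) (delta n)" using cancel_right[OF p1 p2 ee] .
  then show ?thesis using pR e1 by (intro exI[of _ R]) simp
qed

definition dp :: "nat \<Rightarrow> nat \<Rightarrow> word" where "dp n k = concat (replicate k (delta n))"

lemma dp_0[simp]: "dp n 0 = []" by (simp add: dp_def)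
lemma dp_Suc: "dp n (Suc k) = delta n @ dp n k" by (simp add: dp_def)
lemma dp_Suc': "dp n (Suc k) = dp n k @ delta n"
  by (induction k) (simp_all add: dp_Suc)
lemma dp_add: "dp n (a + b) = dp n a @ dp n b" by (simp add: dp_def replicate_add)
lemma pos_dp: "1 \<le> n \<Longrightarrow> pos_word n (dp n k)" by (induction k) (auto simp: dp_Suc pos_delta)

definition tw :: "nat \<Rightarrow> nat \<Rightarrow> word \<Rightarrow> word" where "tw n k W = map (tau n ^^ k) W"

lemma tw_0[simp]: "tw n 0 W = W" by (simp add: tw_def)
lemma tw_Suc: "tw n (Suc k) W = map (tau n) (tw n k W)" by (simp add: tw_def)
lemma tw_app[simp]: "tw n k (U @ W) = tw n k U @ tw n k W" by (simp add: tw_def)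
lemma tw_Nil[simp]: "tw n k [] = []" by (simp add: tw_def)
lemma tw_add: "tw n l (tw n k W) = tw n (l + k) W" by (simp add: tw_def funpow_add)
lemma tw_1: "tw n 1 W = map (tau n) W" by (simp add: tw_def)

lemma tw_pos: "1 \<le> n \<Longrightarrow> pos_word n W \<Longrightarrow> pos_word n (tw n k W)"
proof (induction k)
  case (Suc k) show ?case using tau_pos[OF Suc.prems(1) Suc.IH[OF Suc.prems]] by (simp only: tw_Suc)
qed simp

lemma tw_pe: "1 \<le> n \<Longrightarrow> pos_eq n u v \<Longrightarrow> pos_word n u \<Longrightarrow> pos_eq n (tw n k u) (tw n k v)"
proof (induction k)
  case (Suc k)
  show ?case using tau_pe[OF Suc.prems(1) Suc.IH[OF Suc.prems] tw_pos[OF Suc.prems(1,3)]] by (simp add: tw_Suc)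
qed simp

lemma tw_delta: "1 \<le> n \<Longrightarrow> pos_eq n (tw n k (delta n)) (delta n)"
proof (induction k)
  case (Suc k)
  have "pos_eq n (map (tau n) (tw n k (delta n))) (map (tau n) (delta n))"
    using tau_pe[OF Suc.prems Suc.IH[OF Suc.prems]] tw_pos pos_delta Suc.prems by blast
  from pe_trans[OF this delta_tau[OF Suc.prems]] show ?case by (simp add: tw_Suc)
qed simp

lemma tw_dp: "1 \<le> n \<Longrightarrow> pos_eq n (tw n k (dp n j)) (dp n j)"
proof (induction j)
  case (Suc j)
  show ?case using pe_cat[OF tw_delta[OF Suc.prems, of k] Suc.IH[OF Suc.prems]] by (simp add: dp_Suc)
qed simp

lemma dp_conj: "1 \<le> n \<Longrightarrow> pos_word n W \<Longrightarrow> pos_eq n (dp n k @ W) (tw n k W @ dp n k)"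
proof (induction k arbitrary: W)
  case (Suc k)
  have "pos_eq n (delta n @ dp n k @ W) (delta n @ tw n k W @ dp n k)"
    using Suc by (auto intro: pe_appL)
  also have "pos_eq n (delta n @ tw n k W @ dp n k) (map (tau n) (tw n k W) @ delta n @ dp n k)"
    using delta_conj[OF Suc.prems(1) tw_pos[OF Suc.prems, of k]] pe_appR by fastforce
  finally show ?case by (simp add: dp_Suc tw_Suc)
qed simp



lemma sb_refl[simp]: "sb_eq n u u" unfolding sb_eq_def by (rule cong_gen.refl)
lemma sb_sym: "sb_eq n u v \<Longrightarrow> sb_eq n v u" unfolding sb_eq_def by (rule cong_gen.sym)
lemma sb_trans[trans]: "sb_eq n u v \<Longrightarrow> sb_eq n v w \<Longrightarrow> sb_eq n u w" unfolding sb_eq_def by (rule cong_gen.trans)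
lemma sb_app: "sb_eq n u v \<Longrightarrow> sb_eq n (w@u@z) (w@v@z)" unfolding sb_eq_def by (rule cg_app)
lemma sb_appL: "sb_eq n u v \<Longrightarrow> sb_eq n (w@u) (w@v)" using sb_app[of n u v w "[]"] by simp
lemma sb_appR: "sb_eq n u v \<Longrightarrow> sb_eq n (u@z) (v@z)" using sb_app[of n u v "[]" z] by simp
lemma sb_cat: "sb_eq n u v \<Longrightarrow> sb_eq n u' v' \<Longrightarrow> sb_eq n (u@u') (v@v')"
  using sb_appL sb_appR sb_trans by metis

lemma cg_mono: "cong_gen R u v \<Longrightarrow> R \<subseteq> S \<Longrightarrow> cong_gen S u v"
proof (induction rule: cong_gen.induct)
  case (refl u) show ?case by (rule cong_gen.refl)
next
  case (sym u v) then show ?case by (blast intro: cong_gen.sym)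
next
  case (trans u v w) then show ?case by (metis cong_gen.trans)
next
  case (rel l r a b) then show ?case by (blast intro: cong_gen.rel)
qed

lemma pe_sb: "pos_eq n u v \<Longrightarrow> sb_eq n u v"
  unfolding pos_eq_def sb_eq_def using cg_mono[of "pos_rels n" u v "sb_rels n"] unfolding sb_rels_def by blast

lemma sb_word_simps[simp]: "sb_word n []" "sb_word n (a#u) = (idx_ok n (letter_idx a) \<and> sb_word n u)"
  "sb_word n (u@v) = (sb_word n u \<and> sb_word n v)"
  unfolding sb_word_def by auto

lemma sb_rels_ok: "(l,r) \<in> sb_rels n \<Longrightarrow> sb_word n l \<and> sb_word n r"
  unfolding sb_rels_def pos_rels_def sb_word_def by auto

lemma sb_word_pres: "sb_eq n u v \<Longrightarrow> sb_word n u = sb_word n v"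
  unfolding sb_eq_def
  by (induction rule: cong_gen.induct) (auto dest: sb_rels_ok)

lemma pos_sb_word: "pos_word n u \<Longrightarrow> sb_word n u"
  unfolding pos_word_def sb_word_def by auto

lemma sb_inv1: "idx_ok n i \<Longrightarrow> sb_eq n [Sig i, SigInv i] []"
proof -
  assume "idx_ok n i"
  then have "([Sig i, SigInv i], []) \<in> sb_rels n" unfolding sb_rels_def by blast
  then show ?thesis unfolding sb_eq_def using cong_gen.rel[of "[Sig i, SigInv i]" "[]" "sb_rels n" "[]" "[]"] by simp
qed

lemma sb_inv2: "idx_ok n i \<Longrightarrow> sb_eq n [SigInv i, Sig i] []"
proof -
  assume "idx_ok n i"
  then have "([SigInv i, Sig i], []) \<in> sb_rels n" unfolding sb_rels_def by blast
  then show ?thesis unfolding sb_eq_def using cong_gen.rel[of "[SigInv i, Sig i]" "[]" "sb_rels n" "[]" "[]"] by simp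
qed

definition sigw :: "nat \<Rightarrow> word \<Rightarrow> bool" where
  "sigw n w \<longleftrightarrow> (\<forall>a\<in>set w. \<exists>i. a = Sig i \<and> idx_ok n i)"

lemma inv_word_simps[simp]: "inv_word [] = []" "inv_word (a#w) = inv_word w @ [inv_letter a]"
  "inv_word (u@w) = inv_word w @ inv_word u"
  unfolding inv_word_def by auto

lemma sb_w_inv: "sigw n w \<Longrightarrow> sb_eq n (w @ inv_word w) [] \<and> sb_eq n (inv_word w @ w) []"
proof (induction w)
  case (Cons a w)
  obtain i where a: "a = Sig i" "idx_ok n i" using Cons.prems unfolding sigw_def by auto
  have IH: "sb_eq n (w @ inv_word w) []" "sb_eq n (inv_word w @ w) []"
    using Cons unfolding sigw_def by auto
  have "sb_eq n ([Sig i] @ (w @ inv_word w) @ [SigInv i]) ([Sig i] @ [] @ [SigInv i])"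
    by (rule sb_app[OF IH(1)])
  then have "sb_eq n ((a#w) @ inv_word (a#w)) [Sig i, SigInv i]" using a by simp
  then have 1: "sb_eq n ((a#w) @ inv_word (a#w)) []" using sb_inv1[OF a(2)] sb_trans by blast
  have "sb_eq n (inv_word w @ [SigInv i, Sig i] @ w) (inv_word w @ [] @ w)"
    by (rule sb_app[OF sb_inv2[OF a(2)]])
  then have "sb_eq n (inv_word (a#w) @ (a#w)) (inv_word w @ w)" using a by simp
  then have 2: "sb_eq n (inv_word (a#w) @ (a#w)) []" using IH(2) sb_trans by blast
  show ?case using 1 2 by blast
qed simp

lemma sigw_delta: "1 \<le> n \<Longrightarrow> sigw n (delta n)"
proof -
  assume n: "1 \<le> n"
  show ?thesis unfolding sigw_def delta_D[OF n] by (auto dest!: set_D simp: idx_ok_def)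
qed

lemma sb_word_inv_delta: "1 \<le> n \<Longrightarrow> sb_word n (inv_word (delta n))"
proof -
  assume n: "1 \<le> n"
  have "\<forall>a\<in>set (delta n). \<exists>i. a = Sig i \<and> idx_ok n i" using sigw_delta[OF n] unfolding sigw_def .
  then show ?thesis unfolding sb_word_def inv_word_def by auto
qed

definition mult :: "nat \<Rightarrow> nat \<times> word \<Rightarrow> nat \<times> word \<Rightarrow> nat \<times> word" where
  "mult n x y = (fst x + fst y, tw n (fst y) (snd x) @ snd y)"

lemma mult_simp[simp]: "mult n (k,P) (l,Q) = (k + l, tw n l P @ Q)" by (simp add: mult_def)

lemma mult_assoc: "mult n (mult n x y) z = mult n x (mult n y z)"
  by (cases x; cases y; cases z) (simp add: tw_add ac_simps)

definition Rw :: "nat \<Rightarrow> nat \<Rightarrow> word" where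
  "Rw n i = (SOME R. pos_word n R \<and> pos_eq n (R @ [Sig i]) (delta n) \<and> pos_eq n (Sig (n-i) # R) (delta n))"

lemma Rw: "2 \<le> n \<Longrightarrow> idx_ok n i \<Longrightarrow> pos_word n (Rw n i) \<and> pos_eq n (Rw n i @ [Sig i]) (delta n)
    \<and> pos_eq n (Sig (n-i) # Rw n i) (delta n)"
  unfolding Rw_def by (rule someI_ex) (rule delta_R)

fun phi1 :: "nat \<Rightarrow> letter \<Rightarrow> nat \<times> word" where
  "phi1 n (Sig i) = (0, [Sig i])" | "phi1 n (X i) = (0, [X i])" | "phi1 n (SigInv i) = (1, Rw n i)"

fun Phi :: "nat \<Rightarrow> word \<Rightarrow> nat \<times> word" where
  "Phi n [] = (0, [])" | "Phi n (a#W) = mult n (phi1 n a) (Phi n W)"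

lemma Phi_app: "Phi n (u@v) = mult n (Phi n u) (Phi n v)"
proof (induction u)
  case Nil then show ?case by (cases "Phi n v") simp
next
  case (Cons a u) then show ?case by (simp add: mult_assoc)
qed

lemma Phi_pos_word: "pos_word n W \<Longrightarrow> Phi n W = (0, W)"
proof (induction W)
  case (Cons a W) then show ?case by (cases a) auto
qed simp

lemma Phi_pos: "2 \<le> n \<Longrightarrow> sb_word n W \<Longrightarrow> pos_word n (snd (Phi n W))"
proof (induction W)
  case (Cons a W)
  have p1: "pos_word n (snd (phi1 n a))" using Cons.prems Rw[of n] by (cases a) auto
  have "pos_word n (tw n (fst (Phi n W)) (snd (phi1 n a)))" using tw_pos[OF _ p1] Cons.prems by simp
  then show ?case using Cons by (simp add: mult_def)
qed simp

definition eqv :: "nat \<Rightarrow> nat \<times> word \<Rightarrow> nat \<times> word \<Rightarrow> bool" where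
  "eqv n x y \<longleftrightarrow> (\<exists>N. fst x \<le> N \<and> fst y \<le> N \<and> pos_eq n (dp n (N - fst x) @ snd x) (dp n (N - fst y) @ snd y))"

lemma wit_mono: "pos_eq n (dp n (N - a) @ P) (dp n (N - b) @ Q) \<Longrightarrow> a \<le> N \<Longrightarrow> b \<le> N \<Longrightarrow> N \<le> M \<Longrightarrow>
   pos_eq n (dp n (M - a) @ P) (dp n (M - b) @ Q)"
proof -
  assume h: "pos_eq n (dp n (N - a) @ P) (dp n (N - b) @ Q)" "a \<le> N" "b \<le> N" "N \<le> M"
  have "M - a = (M - N) + (N - a)" "M - b = (M - N) + (N - b)" using h by auto
  then show ?thesis using pe_appL[OF h(1), of "dp n (M - N)"] by (simp add: dp_add)
qed

lemma eqv_refl: "eqv n x x" unfolding eqv_def by (rule exI[of _ "fst x"]) simp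

lemma eqv_sym: "eqv n x y \<Longrightarrow> eqv n y x" unfolding eqv_def using pe_sym by blast

lemma eqv_trans: "eqv n x y \<Longrightarrow> eqv n y z \<Longrightarrow> eqv n x z"
proof -
  assume "eqv n x y" "eqv n y z"
  then obtain N1 N2 where 1: "fst x \<le> N1" "fst y \<le> N1" "pos_eq n (dp n (N1 - fst x) @ snd x) (dp n (N1 - fst y) @ snd y)"
    and 2: "fst y \<le> N2" "fst z \<le> N2" "pos_eq n (dp n (N2 - fst y) @ snd y) (dp n (N2 - fst z) @ snd z)"
    unfolding eqv_def by blast
  have a: "pos_eq n (dp n (N1 + N2 - fst x) @ snd x) (dp n (N1 + N2 - fst y) @ snd y)"
    using wit_mono[OF 1(3) 1(1,2)] by simp
  have b: "pos_eq n (dp n (N1 + N2 - fst y) @ snd y) (dp n (N1 + N2 - fst z) @ snd z)"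
    using wit_mono[OF 2(3) 2(1,2), of "N1 + N2"] by simp
  show ?thesis unfolding eqv_def using 1 2 pe_trans[OF a b] by (intro exI[of _ "N1 + N2"]) simp
qed

lemma eqv_multL: "1 \<le> n \<Longrightarrow> eqv n x x' \<Longrightarrow> pos_word n (snd x) \<Longrightarrow> pos_word n (snd x') \<Longrightarrow>
   eqv n (mult n x y) (mult n x' y)"
proof -
  assume n: "1 \<le> n" and e: "eqv n x x'" and px: "pos_word n (snd x)" and px': "pos_word n (snd x')"
  obtain k P k' P' l Q where xs: "x = (k,P)" "x' = (k',P')" "y = (l,Q)" by (cases x; cases x'; cases y) auto
  obtain N where N: "k \<le> N" "k' \<le> N" "pos_eq n (dp n (N - k) @ P) (dp n (N - k') @ P')"
    using e xs unfolding eqv_def by auto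
  have pP: "pos_word n P" "pos_word n P'" using px px' xs by auto
  have t: "pos_eq n (tw n l (dp n (N - k)) @ tw n l P) (tw n l (dp n (N - k')) @ tw n l P')"
    using tw_pe[OF n N(3)] pos_dp[OF n] pP by simp
  have "pos_eq n (dp n (N - k) @ tw n l P) (tw n l (dp n (N - k)) @ tw n l P)"
    using pe_appR[OF pe_sym[OF tw_dp[OF n]]] .
  also note t
  also have "pos_eq n (tw n l (dp n (N - k')) @ tw n l P') (dp n (N - k') @ tw n l P')"
    using pe_appR[OF tw_dp[OF n]] .
  finally have "pos_eq n ((dp n (N - k) @ tw n l P) @ Q) ((dp n (N - k') @ tw n l P') @ Q)"
    by (rule pe_appR)
  then show ?thesis unfolding eqv_def using xs N by (intro exI[of _ "N + l"]) simp
qed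

lemma eqv_multR: "1 \<le> n \<Longrightarrow> eqv n y y' \<Longrightarrow> pos_word n (snd x) \<Longrightarrow> eqv n (mult n x y) (mult n x y')"
proof -
  assume n: "1 \<le> n" and e: "eqv n y y'" and px: "pos_word n (snd x)"
  obtain k P l Q l' Q' where xs: "x = (k,P)" "y = (l,Q)" "y' = (l',Q')" by (cases x; cases y; cases y') auto
  obtain M where M: "l \<le> M" "l' \<le> M" "pos_eq n (dp n (M - l) @ Q) (dp n (M - l') @ Q')"
    using e xs unfolding eqv_def by auto
  have pP: "pos_word n P" using px xs by auto
  have c1: "pos_eq n (dp n (M - l) @ tw n l P) (tw n M P @ dp n (M - l))"
    using dp_conj[OF n tw_pos[OF n pP], of "M - l" l] M tw_add[of n "M - l" l P] by simp
  have c2: "pos_eq n (dp n (M - l') @ tw n l' P) (tw n M P @ dp n (M - l'))"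
    using dp_conj[OF n tw_pos[OF n pP], of "M - l'" l'] M tw_add[of n "M - l'" l' P] by simp
  have "pos_eq n (dp n (M - l) @ tw n l P @ Q) (tw n M P @ dp n (M - l) @ Q)"
    using pe_appR[OF c1, of Q] by simp
  also have "pos_eq n (tw n M P @ dp n (M - l) @ Q) (tw n M P @ dp n (M - l') @ Q')"
    using pe_appL[OF M(3)] by simp
  also have "pos_eq n (tw n M P @ dp n (M - l') @ Q') (dp n (M - l') @ tw n l' P @ Q')"
    using pe_appR[OF pe_sym[OF c2], of Q'] by simp
  finally show ?thesis unfolding eqv_def using xs M by (intro exI[of _ "M + k"]) simp
qed

lemma Phi_rel: "2 \<le> n \<Longrightarrow> (l,r) \<in> sb_rels n \<Longrightarrow> eqv n (Phi n l) (Phi n r)"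
proof -
  assume n: "2 \<le> n" and lr: "(l,r) \<in> sb_rels n"
  consider "(l,r) \<in> pos_rels n" | i where "idx_ok n i" "l = [Sig i, SigInv i]" "r = []"
    | i where "idx_ok n i" "l = [SigInv i, Sig i]" "r = []"
    using lr unfolding sb_rels_def by blast
  then show ?thesis
  proof cases
    case 1
    have "Phi n l = (0,l)" "Phi n r = (0,r)" using Phi_pos_word pos_rels_pos[OF 1] by auto
    then show ?thesis unfolding eqv_def using pe_rel[OF 1] by (intro exI[of _ 0]) simp
  next
    case (2 i)
    have "Phi n l = (1, Sig (n-i) # Rw n i)" using 2 n by (simp add: tw_def)
    moreover have "pos_eq n (Sig (n-i) # Rw n i) (delta n)" using Rw[OF n 2(1)] by blast
    ultimately show ?thesis unfolding eqv_def using 2 by (intro exI[of _ 1]) (simp add: dp_Suc)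
  next
    case (3 i)
    have "Phi n l = (1, Rw n i @ [Sig i])" using 3 n by (simp add: tw_def)
    moreover have "pos_eq n (Rw n i @ [Sig i]) (delta n)" using Rw[OF n 3(1)] by blast
    ultimately show ?thesis unfolding eqv_def using 3 by (intro exI[of _ 1]) (simp add: dp_Suc)
  qed
qed

lemma Phi_sb: "2 \<le> n \<Longrightarrow> sb_eq n U V \<Longrightarrow> sb_word n U \<Longrightarrow> eqv n (Phi n U) (Phi n V)"
proof -
  assume n: "2 \<le> n"
  have "cong_gen (sb_rels n) U V \<Longrightarrow> sb_word n U \<Longrightarrow> eqv n (Phi n U) (Phi n V)"
  proof (induction rule: cong_gen.induct)
    case (refl u) show ?case by (rule eqv_refl)
  next
    case (sym u v)
    then have "sb_word n u" using sb_word_pres[of n u v] unfolding sb_eq_def by simp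
    then show ?case using sym eqv_sym by blast
  next
    case (trans u v w)
    then have "sb_word n v" using sb_word_pres[of n u v] unfolding sb_eq_def by simp
    then show ?case using trans eqv_trans by blast
  next
    case (rel l r a b)
    have wl: "sb_word n l" "sb_word n r" "sb_word n a" "sb_word n b" using rel sb_rels_ok[OF rel(1)] by auto
    have e1: "eqv n (Phi n l) (Phi n r)" using Phi_rel[OF n rel(1)] .
    have e2: "eqv n (mult n (Phi n l) (Phi n b)) (mult n (Phi n r) (Phi n b))"
      using eqv_multL[OF _ e1] Phi_pos[OF n] wl n by simp
    have "eqv n (mult n (Phi n a) (mult n (Phi n l) (Phi n b))) (mult n (Phi n a) (mult n (Phi n r) (Phi n b)))"
      using eqv_multR[OF _ e2] Phi_pos[OF n] wl n by simp
    then show ?case by (simp add: Phi_app)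
  qed
  then show "sb_eq n U V \<Longrightarrow> sb_word n U \<Longrightarrow> eqv n (Phi n U) (Phi n V)" unfolding sb_eq_def .
qed



definition invdp :: "nat \<Rightarrow> nat \<Rightarrow> word" where "invdp n j = concat (replicate j (inv_word (delta n)))"

lemma invdp_0[simp]: "invdp n 0 = []" by (simp add: invdp_def)
lemma invdp_Suc: "invdp n (Suc j) = inv_word (delta n) @ invdp n j" by (simp add: invdp_def)
lemma invdp_Suc': "invdp n (Suc j) = invdp n j @ inv_word (delta n)"
  by (induction j) (simp_all add: invdp_Suc)

lemma delta_pow_nonneg: "0 \<le> m \<Longrightarrow> delta_pow n m = dp n (nat m)" by (simp add: delta_pow_def dp_def)
lemma delta_pow_neg: "m < 0 \<Longrightarrow> delta_pow n m = invdp n (nat (-m))" by (simp add: delta_pow_def invdp_def)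

lemma sb_word_invdp: "1 \<le> n \<Longrightarrow> sb_word n (invdp n j)"
  by (induction j) (simp_all add: invdp_Suc sb_word_inv_delta)

lemma Phi_invdelta: "2 \<le> n \<Longrightarrow> eqv n (Phi n (inv_word (delta n))) (1, [])"
proof -
  assume n: "2 \<le> n"
  have n1: "1 \<le> n" using n by simp
  obtain k P where kP: "Phi n (inv_word (delta n)) = (k,P)" by (cases "Phi n (inv_word (delta n))") auto
  have sb: "sb_eq n (delta n @ inv_word (delta n)) []" using sb_w_inv[OF sigw_delta[OF n1]] by blast
  have sbw: "sb_word n (delta n @ inv_word (delta n))"
    using pos_sb_word[OF pos_delta[OF n1]] sb_word_inv_delta[OF n1] by simp
  have e: "eqv n (Phi n (delta n @ inv_word (delta n))) (Phi n [])" using Phi_sb[OF n sb sbw] .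
  have "Phi n (delta n @ inv_word (delta n)) = (k, tw n k (delta n) @ P)"
    using Phi_app[of n "delta n" "inv_word (delta n)"] Phi_pos_word[OF pos_delta[OF n1]] kP by simp
  then obtain N where N: "k \<le> N" "pos_eq n (dp n (N - k) @ tw n k (delta n) @ P) (dp n N)"
    using e unfolding eqv_def by auto
  have t: "pos_eq n (delta n) (tw n k (delta n))" using pe_sym[OF tw_delta[OF n1, of k]] .
  have "pos_eq n (dp n (N - k) @ delta n @ P) (dp n (N - k) @ tw n k (delta n) @ P)"
    using pe_appL[OF pe_appR[OF t, of P], of "dp n (N - k)"] by simp
  moreover have "dp n (Suc N - k) = dp n (N - k) @ delta n" using N(1) by (simp add: Suc_diff_le dp_Suc')
  ultimately have "pos_eq n (dp n (Suc N - k) @ P) (dp n (N - k) @ tw n k (delta n) @ P)" by simp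
  also note N(2)
  finally show ?thesis unfolding eqv_def using kP N(1) by (intro exI[of _ "Suc N"]) simp
qed

lemma Phi_invdp: "2 \<le> n \<Longrightarrow> pos_word n A \<Longrightarrow> eqv n (Phi n (invdp n j @ A)) (j, A)"
proof (induction j)
  case 0 then show ?case by (simp add: Phi_pos_word eqv_refl)
next
  case (Suc j)
  have n1: "1 \<le> n" using Suc by simp
  have p1: "pos_word n (snd (Phi n (inv_word (delta n))))" using Phi_pos[OF Suc.prems(1) sb_word_inv_delta[OF n1]] .
  have e1: "eqv n (mult n (Phi n (inv_word (delta n))) (Phi n (invdp n j @ A))) (mult n (1,[]) (Phi n (invdp n j @ A)))"
    using eqv_multL[OF n1 Phi_invdelta[OF Suc.prems(1)] p1] by simp
  have e2: "eqv n (mult n (1,[]) (Phi n (invdp n j @ A))) (mult n (1,[]) (j, A))"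
    using eqv_multR[OF n1 Suc.IH[OF Suc.prems], of "(1,[])"] by simp
  have "mult n (1,[]) (j, A) = (Suc j, A)" by simp
  then show ?case using eqv_trans[OF e1 e2] by (simp add: invdp_Suc Phi_app)
qed

definition nrm :: "nat \<Rightarrow> int \<Rightarrow> word \<Rightarrow> nat \<times> word" where
  "nrm n m A = (if 0 \<le> m then (0, dp n (nat m) @ A) else (nat (-m), A))"

lemma Phi_delta_pow: "2 \<le> n \<Longrightarrow> pos_word n A \<Longrightarrow> eqv n (Phi n (delta_pow n m @ A)) (nrm n m A)"
proof (cases "0 \<le> m")
  case True
  assume n: "2 \<le> n" and A: "pos_word n A"
  have "pos_word n (delta_pow n m @ A)" using True A pos_dp[of n] n by (simp add: delta_pow_nonneg)
  then show ?thesis using True by (simp add: Phi_pos_word nrm_def delta_pow_nonneg eqv_refl)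
next
  case False
  assume n: "2 \<le> n" and A: "pos_word n A"
  then show ?thesis using False Phi_invdp[OF n A, of "nat (-m)"] by (simp add: nrm_def delta_pow_neg)
qed

lemma nrm_dp: "fst (nrm n m A) \<le> N \<Longrightarrow> dp n (N - fst (nrm n m A)) @ snd (nrm n m A) = dp n (nat (int N + m)) @ A"
proof (cases "0 \<le> m")
  case True
  then have "nat (int N + m) = N + nat m" by simp
  then show ?thesis using True by (simp add: nrm_def dp_add)
next
  case False
  assume "fst (nrm n m A) \<le> N"
  then have "N - nat (-m) = nat (int N + m)" using False by (simp add: nrm_def)
  then show ?thesis using False by (simp add: nrm_def)
qed

lemma nrm_eqv: "eqv n (nrm n m A) (nrm n p C) \<Longrightarrow> \<exists>s t. int s - int t = m - p \<and> pos_eq n (dp n s @ A) (dp n t @ C)"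
proof -
  assume "eqv n (nrm n m A) (nrm n p C)"
  then obtain N where N: "fst (nrm n m A) \<le> N" "fst (nrm n p C) \<le> N"
    "pos_eq n (dp n (N - fst (nrm n m A)) @ snd (nrm n m A)) (dp n (N - fst (nrm n p C)) @ snd (nrm n p C))"
    unfolding eqv_def by blast
  have "pos_eq n (dp n (nat (int N + m)) @ A) (dp n (nat (int N + p)) @ C)"
    using N(3) nrm_dp[OF N(1)] nrm_dp[OF N(2)] by simp
  moreover have "int (nat (int N + m)) - int (nat (int N + p)) = m - p"
    using N(1,2) by (auto simp: nrm_def split: if_splits)
  ultimately show ?thesis by blast
qed

lemma dp_prime1: "1 \<le> n \<Longrightarrow> pos_word n A \<Longrightarrow> pos_word n C \<Longrightarrow> prime_to_delta n A \<Longrightarrow> s \<le> t \<Longrightarrow>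
   pos_eq n (dp n s @ A) (dp n t @ C) \<Longrightarrow> s = t \<and> pos_eq n A C"
proof -
  assume n: "1 \<le> n" and A: "pos_word n A" and C: "pos_word n C" and pr: "prime_to_delta n A"
    and st: "s \<le> t" and e: "pos_eq n (dp n s @ A) (dp n t @ C)"
  have "dp n t = dp n s @ dp n (t - s)" using st dp_add[of n s "t - s"] by simp
  then have e': "pos_eq n (dp n s @ A) (dp n s @ (dp n (t - s) @ C))" using e by simp
  have "pos_eq n A (dp n (t - s) @ C)"
    by (rule cancel_left[OF _ _ e']) (use A C pos_dp[OF n] in simp_all)
  moreover have "t - s = 0"
  proof (rule ccontr)
    assume "t - s \<noteq> 0"
    then obtain j where j: "t - s = Suc j" by (cases "t - s") auto
    have "pos_eq n A (delta n @ (dp n j @ C))" using calculation j by (simp add: dp_Suc)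
    moreover have "pos_word n (dp n j @ C)" using C pos_dp[OF n] by simp
    ultimately show False using pr unfolding prime_to_delta_def by blast
  qed
  ultimately show ?thesis using st by simp
qed

lemma dp_prime: "1 \<le> n \<Longrightarrow> pos_word n A \<Longrightarrow> pos_word n C \<Longrightarrow> prime_to_delta n A \<Longrightarrow> prime_to_delta n C \<Longrightarrow>
   pos_eq n (dp n s @ A) (dp n t @ C) \<Longrightarrow> s = t \<and> pos_eq n A C"
proof (cases "s \<le> t")
  case True
  assume "1 \<le> n" "pos_word n A" "pos_word n C" "prime_to_delta n A" "prime_to_delta n C" "pos_eq n (dp n s @ A) (dp n t @ C)"
  then show ?thesis using dp_prime1 True by blast
next
  case False
  assume h: "1 \<le> n" "pos_word n A" "pos_word n C" "prime_to_delta n A" "prime_to_delta n C" "pos_eq n (dp n s @ A) (dp n t @ C)"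
  have "t = s \<and> pos_eq n C A" using dp_prime1[OF h(1,3,2,5) _ pe_sym[OF h(6)]] False by simp
  then show ?thesis using pe_sym by blast
qed

lemma own_base_eq: "own_base n A \<Longrightarrow> own_base n C \<Longrightarrow> pos_word n A \<Longrightarrow> pos_word n C \<Longrightarrow> pos_eq n A C \<Longrightarrow> A = C"
proof (rule ccontr)
  assume h: "own_base n A" "own_base n C" "pos_word n A" "pos_word n C" "pos_eq n A C" "A \<noteq> C"
  have 1: "word_less n A C" using h unfolding own_base_def by blast
  have 2: "word_less n C A" using h pe_sym[OF h(5)] unfolding own_base_def by blast
  have tr: "trans {(a, b). (a::nat) < b}" unfolding trans_def by auto
  have "(map (rank n) A, map (rank n) A) \<in> lexord {(a, b). a < b}"
    using lexord_trans[OF 1[unfolded word_less_def] 2[unfolded word_less_def] tr] .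
  then show False using lexord_irreflexive[of "{(a, b). (a::nat) < b}"] by auto
qed

lemma uniq: "2 \<le> n \<Longrightarrow> pos_word n A \<Longrightarrow> prime_to_delta n A \<Longrightarrow> own_base n A \<Longrightarrow>
   pos_word n C \<Longrightarrow> prime_to_delta n C \<Longrightarrow> own_base n C \<Longrightarrow>
   sb_eq n (delta_pow n m @ A) (delta_pow n p @ C) \<Longrightarrow> m = p \<and> A = C"
proof -
  assume n: "2 \<le> n" and A: "pos_word n A" "prime_to_delta n A" "own_base n A"
    and C: "pos_word n C" "prime_to_delta n C" "own_base n C"
    and e: "sb_eq n (delta_pow n m @ A) (delta_pow n p @ C)"
  have n1: "1 \<le> n" using n by simp
  have sw: "sb_word n (delta_pow n m @ A)"
  proof (cases "0 \<le> m")
    case True then show ?thesis using pos_sb_word pos_dp[OF n1] A(1) by (simp add: delta_pow_nonneg)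
  next
    case False then show ?thesis using sb_word_invdp[OF n1] pos_sb_word A(1) by (simp add: delta_pow_neg)
  qed
  have "eqv n (nrm n m A) (nrm n p C)"
    using eqv_trans[OF eqv_trans[OF eqv_sym[OF Phi_delta_pow[OF n A(1)]] Phi_sb[OF n e sw]] Phi_delta_pow[OF n C(1)]] .
  then obtain s t where st: "int s - int t = m - p" "pos_eq n (dp n s @ A) (dp n t @ C)" using nrm_eqv by blast
  have "s = t \<and> pos_eq n A C" using dp_prime[OF n1 A(1) C(1) A(2) C(2) st(2)] .
  then show ?thesis using st(1) own_base_eq[OF A(3) C(3) A(1) C(1)] by auto
qed



lemma tau_ok: "1 \<le> n \<Longrightarrow> pos_word n [a] \<Longrightarrow> pos_word n [tau n a]"
  using tau_pos[of n "[a]"] by simp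

lemma sb_letter_inv: "2 \<le> n \<Longrightarrow> pos_word n [a] \<Longrightarrow> sb_eq n (a # inv_word (delta n)) (inv_word (delta n) @ [tau n a])"
proof -
  assume n: "2 \<le> n" and a: "pos_word n [a]"
  have n1: "1 \<le> n" using n by simp
  let ?I = "inv_word (delta n)"
  have ii: "sb_eq n (delta n @ ?I) []" "sb_eq n (?I @ delta n) []" using sb_w_inv[OF sigw_delta[OF n1]] by auto
  have "sb_eq n (a # ?I) ((?I @ delta n) @ a # ?I)" using sb_appR[OF sb_sym[OF ii(2)], of "a # ?I"] by simp
  also have "sb_eq n ((?I @ delta n) @ a # ?I) (?I @ (delta n @ [a]) @ ?I)" by simp
  also have "sb_eq n (?I @ (delta n @ [a]) @ ?I) (?I @ (tau n a # delta n) @ ?I)"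
    using sb_app[OF pe_sb[OF delta_conj[OF n1 a]], of ?I ?I] by simp
  also have "sb_eq n (?I @ (tau n a # delta n) @ ?I) ((?I @ [tau n a]) @ (delta n @ ?I))" by simp
  also have "sb_eq n ((?I @ [tau n a]) @ (delta n @ ?I)) ((?I @ [tau n a]) @ [])"
    using sb_appL[OF ii(1)] .
  finally show ?thesis by simp
qed

lemma sb_letter_invdp: "2 \<le> n \<Longrightarrow> pos_word n [a] \<Longrightarrow> sb_eq n (a # invdp n k) (invdp n k @ [(tau n ^^ k) a])"
proof (induction k arbitrary: a)
  case 0 then show ?case by simp
next
  case (Suc k)
  have n1: "1 \<le> n" using Suc by simp
  have "sb_eq n (a # invdp n (Suc k)) ((a # inv_word (delta n)) @ invdp n k)" by (simp add: invdp_Suc)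
  also have "sb_eq n ((a # inv_word (delta n)) @ invdp n k) (inv_word (delta n) @ (tau n a # invdp n k))"
    using sb_appR[OF sb_letter_inv[OF Suc.prems], of "invdp n k"] by simp
  also have "sb_eq n (inv_word (delta n) @ (tau n a # invdp n k)) (inv_word (delta n) @ (invdp n k @ [(tau n ^^ k) (tau n a)]))"
    using sb_appL[OF Suc.IH[OF Suc.prems(1) tau_ok[OF n1 Suc.prems(2)]]] .
  finally show ?case by (simp add: invdp_Suc funpow_Suc_right del: funpow.simps)
qed

lemma sb_word_invdp_comm: "2 \<le> n \<Longrightarrow> pos_word n W \<Longrightarrow> sb_eq n (W @ invdp n k) (invdp n k @ tw n k W)"
proof (induction W)
  case Nil then show ?case by simp
next
  case (Cons a W)
  have "sb_eq n ((a # W) @ invdp n k) (a # invdp n k @ tw n k W)"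
    using sb_appL[OF Cons.IH[OF Cons.prems(1)], of "[a]"] Cons.prems by simp
  also have "sb_eq n (a # invdp n k @ tw n k W) (invdp n k @ [(tau n ^^ k) a] @ tw n k W)"
    using sb_appR[OF sb_letter_invdp[OF Cons.prems(1), of a k], of "tw n k W"] Cons.prems by simp
  finally show ?case by (simp add: tw_def)
qed

lemma sb_SigInv: "2 \<le> n \<Longrightarrow> idx_ok n i \<Longrightarrow> sb_eq n [SigInv i] (inv_word (delta n) @ Rw n i)"
proof -
  assume n: "2 \<le> n" and i: "idx_ok n i"
  have n1: "1 \<le> n" using n by simp
  let ?I = "inv_word (delta n)"
  have ii: "sb_eq n (?I @ delta n) []" using sb_w_inv[OF sigw_delta[OF n1]] by auto
  have R: "pos_eq n (Rw n i @ [Sig i]) (delta n)" using Rw[OF n i] by blast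
  have "sb_eq n [SigInv i] ((?I @ delta n) @ [SigInv i])" using sb_appR[OF sb_sym[OF ii], of "[SigInv i]"] by simp
  also have "sb_eq n ((?I @ delta n) @ [SigInv i]) (?I @ (Rw n i @ [Sig i]) @ [SigInv i])"
    using sb_app[OF pe_sb[OF pe_sym[OF R]], of ?I "[SigInv i]"] by simp
  also have "sb_eq n (?I @ (Rw n i @ [Sig i]) @ [SigInv i]) ((?I @ Rw n i) @ [Sig i, SigInv i])" by simp
  also have "sb_eq n ((?I @ Rw n i) @ [Sig i, SigInv i]) ((?I @ Rw n i) @ [])"
    using sb_appL[OF sb_inv1[OF i]] .
  finally show ?thesis by simp
qed

lemma ex_form: "2 \<le> n \<Longrightarrow> sb_word n W \<Longrightarrow> \<exists>k P. pos_word n P \<and> sb_eq n W (invdp n k @ P)"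
proof (induction W)
  case Nil then show ?case by (intro exI[of _ 0] exI[of _ "[]"]) simp
next
  case (Cons a W)
  have n1: "1 \<le> n" using Cons by simp
  obtain k P where P: "pos_word n P" "sb_eq n W (invdp n k @ P)" using Cons by auto
  have aW: "sb_eq n (a # W) (a # invdp n k @ P)" using sb_appL[OF P(2), of "[a]"] by simp
  show ?case
  proof (cases a)
    case (SigInv i)
    have i: "idx_ok n i" using Cons.prems SigInv by simp
    have pR: "pos_word n (Rw n i)" using Rw[OF Cons.prems(1) i] by blast
    have "sb_eq n (a # invdp n k @ P) ((inv_word (delta n) @ Rw n i) @ invdp n k @ P)"
      using sb_appR[OF sb_SigInv[OF Cons.prems(1) i], of "invdp n k @ P"] SigInv by simp
    also have "sb_eq n ((inv_word (delta n) @ Rw n i) @ invdp n k @ P) (inv_word (delta n) @ (invdp n k @ tw n k (Rw n i)) @ P)"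
      using sb_app[OF sb_word_invdp_comm[OF Cons.prems(1) pR, of k], of "inv_word (delta n)" P] by simp
    also have "inv_word (delta n) @ (invdp n k @ tw n k (Rw n i)) @ P = invdp n (Suc k) @ (tw n k (Rw n i) @ P)"
      by (simp add: invdp_Suc)
    finally have "sb_eq n (a # W) (invdp n (Suc k) @ (tw n k (Rw n i) @ P))" using aW sb_trans by blast
    moreover have "pos_word n (tw n k (Rw n i) @ P)" using tw_pos[OF n1 pR] P(1) by simp
    ultimately show ?thesis by blast
  next
    case (Sig i)
    have pa: "pos_word n [a]" using Cons.prems Sig by simp
    have "sb_eq n (a # invdp n k @ P) (invdp n k @ [(tau n ^^ k) a] @ P)"
      using sb_appR[OF sb_letter_invdp[OF Cons.prems(1) pa, of k], of P] by simp
    moreover have "pos_word n ([(tau n ^^ k) a] @ P)" using tw_pos[OF n1 pa, of k] P(1) by (simp add: tw_def)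
    ultimately show ?thesis using aW sb_trans by blast
  next
    case (X i)
    have pa: "pos_word n [a]" using Cons.prems X by simp
    have "sb_eq n (a # invdp n k @ P) (invdp n k @ [(tau n ^^ k) a] @ P)"
      using sb_appR[OF sb_letter_invdp[OF Cons.prems(1) pa, of k], of P] by simp
    moreover have "pos_word n ([(tau n ^^ k) a] @ P)" using tw_pos[OF n1 pa, of k] P(1) by (simp add: tw_def)
    ultimately show ?thesis using aW sb_trans by blast
  qed
qed

lemma delta_nonempty: "2 \<le> n \<Longrightarrow> delta n \<noteq> []"
proof -
  assume n: "2 \<le> n"
  then obtain m where m: "n - 1 = Suc m" by (cases "n - 1") auto
  show ?thesis using delta_D[of n] n m by (simp add: D_Suc Pi_def)
qed

lemma prime_decomp: "2 \<le> n \<Longrightarrow> pos_word n P \<Longrightarrow> \<exists>j A. pos_word n A \<and> prime_to_delta n A \<and> pos_eq n P (dp n j @ A)"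
proof (induction "length P" arbitrary: P rule: less_induct)
  case less
  show ?case
  proof (cases "prime_to_delta n P")
    case True then show ?thesis using less.prems by (intro exI[of _ 0] exI[of _ P]) simp
  next
    case False
    then obtain Z where Z: "pos_word n Z" "pos_eq n P (delta n @ Z)" unfolding prime_to_delta_def by blast
    have "length Z < length P" using pe_len[OF Z(2)] delta_nonempty[OF less.prems(1)] by simp
    then obtain j A where A: "pos_word n A" "prime_to_delta n A" "pos_eq n Z (dp n j @ A)"
      using less.hyps less.prems(1) Z(1) by blast
    have "pos_eq n P (dp n (Suc j) @ A)" using pe_trans[OF Z(2) pe_appL[OF A(3), of "delta n"]] by (simp add: dp_Suc)
    then show ?thesis using A by blast
  qed
qed

lemma rank_inj: "pos_word n [a] \<Longrightarrow> pos_word n [b] \<Longrightarrow> rank n a = rank n b \<Longrightarrow> a = b"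
  by (cases a; cases b) (auto simp: idx_ok_def)

lemma base_exists: "2 \<le> n \<Longrightarrow> pos_word n A \<Longrightarrow> \<exists>B. pos_word n B \<and> pos_eq n A B \<and> own_base n B"
proof -
  assume n: "2 \<le> n" and A: "pos_word n A"
  define S where "S = {B. pos_word n B \<and> pos_eq n A B}"
  define Rk where "Rk = map (rank n) ` S"
  have sub: "Rk \<subseteq> {xs. set xs \<subseteq> {0..2*n} \<and> length xs = length A}"
  proof
    fix xs assume "xs \<in> Rk"
    then obtain B where B: "B \<in> S" "xs = map (rank n) B" unfolding Rk_def by blast
    have "\<forall>a\<in>set B. rank n a \<le> 2 * n"
    proof
      fix a assume "a \<in> set B"
      then have "is_pos_letter a \<and> idx_ok n (letter_idx a)" using B(1) unfolding S_def pos_word_def by blast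
      then show "rank n a \<le> 2 * n" by (cases a) (auto simp: idx_ok_def)
    qed
    moreover have "length B = length A" using B(1) pe_len unfolding S_def by fastforce
    ultimately show "xs \<in> {xs. set xs \<subseteq> {0..2*n} \<and> length xs = length A}" using B(2) by auto
  qed
  have fin: "finite Rk" using finite_subset[OF sub finite_lists_length_eq] by blast
  have ne: "Rk \<noteq> {}" using A unfolding Rk_def S_def by auto
  obtain B where B: "B \<in> S" "map (rank n) B = Min Rk" using Min_in[OF fin ne] unfolding Rk_def by auto
  have pB: "pos_word n B" "pos_eq n A B" using B(1) unfolding S_def by auto
  have "own_base n B" unfolding own_base_def
  proof (intro allI impI)
    fix B' assume h: "pos_word n B' \<and> pos_eq n B B'"
    then have "B' \<in> S" using pB pe_trans unfolding S_def by blast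
    then have le: "map (rank n) B \<le> map (rank n) B'" using B(2) Min_le[OF fin] unfolding Rk_def by auto
    show "B = B' \<or> word_less n B B'"
    proof (cases "map (rank n) B = map (rank n) B'")
      case True
      have "inj_on (rank n) (set B \<union> set B')"
        using pB(1) h rank_inj[of n] unfolding inj_on_def pos_word_def by auto
      then show ?thesis using True inj_on_map_eq_map by blast
    next
      case False
      then have "map (rank n) B < map (rank n) B'" using le by simp
      then show ?thesis unfolding word_less_def list_less_def by blast
    qed
  qed
  then show ?thesis using pB by blast
qed

lemma invdp_dp: "2 \<le> n \<Longrightarrow> sb_eq n (invdp n k @ dp n j) (delta_pow n (int j - int k))"
proof (induction k arbitrary: j)
  case 0 then show ?case by (simp add: delta_pow_nonneg)
next
  case (Suc k)
  have n1: "1 \<le> n" using Suc by simp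
  show ?case
  proof (cases j)
    case 0
    have "nat (int k + 1) = Suc k" by simp
    then show ?thesis using 0 by (simp add: delta_pow_neg del: invdp_Suc')
  next
    case (Suc j')
    have ii: "sb_eq n (inv_word (delta n) @ delta n) []" using sb_w_inv[OF sigw_delta[OF n1]] by auto
    have "invdp n (Suc k) @ dp n j = invdp n k @ (inv_word (delta n) @ delta n) @ dp n j'"
      using Suc by (simp add: invdp_Suc' dp_Suc)
    moreover have "sb_eq n (invdp n k @ (inv_word (delta n) @ delta n) @ dp n j') (invdp n k @ [] @ dp n j')"
      by (rule sb_app[OF ii])
    moreover have "sb_eq n (invdp n k @ dp n j') (delta_pow n (int j' - int k))" using "Suc.IH" "Suc.prems" by blast
    ultimately show ?thesis using Suc sb_trans by fastforce
  qed
qed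

lemma existence: "2 \<le> n \<Longrightarrow> sb_word n W \<Longrightarrow>
  \<exists>(m::int) A. pos_word n A \<and> prime_to_delta n A \<and> own_base n A \<and> sb_eq n W (delta_pow n m @ A)"
proof -
  assume n: "2 \<le> n" and W: "sb_word n W"
  obtain k P where P: "pos_word n P" "sb_eq n W (invdp n k @ P)" using ex_form[OF n W] by blast
  obtain j A where A: "pos_word n A" "prime_to_delta n A" "pos_eq n P (dp n j @ A)" using prime_decomp[OF n P(1)] by blast
  obtain B where B: "pos_word n B" "pos_eq n A B" "own_base n B" using base_exists[OF n A(1)] by blast
  have prB: "prime_to_delta n B" using A(2) B(2) pe_trans pe_sym unfolding prime_to_delta_def by blast
  have "sb_eq n W (invdp n k @ dp n j @ B)"
    using sb_trans[OF P(2) sb_appL[OF pe_sb[OF pe_trans[OF A(3) pe_appL[OF B(2)]]]]] .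
  also have "sb_eq n (invdp n k @ dp n j @ B) (delta_pow n (int j - int k) @ B)"
    using sb_appR[OF invdp_dp[OF n], of k j B] by simp
  finally show ?thesis using B prB by blast
qed

theorem theorem2p1:
  fixes n :: nat
  assumes "2 \<le> n"
  shows "(\<forall>W. sb_word n W \<longrightarrow>
            (\<exists>(m::int) A. pos_word n A \<and> prime_to_delta n A \<and> own_base n A
                   \<and> sb_eq n W (delta_pow n m @ A)))
       \<and> (\<forall>(m::int) (p::int) A C.
            pos_word n A \<and> prime_to_delta n A \<and> own_base n A \<and>
            pos_word n C \<and> prime_to_delta n C \<and> own_base n C \<and>
            sb_eq n (delta_pow n m @ A) (delta_pow n p @ C)
            \<longrightarrow> m = p \<and> A = C)"
  using existence[OF assms] uniq[OF assms] by blast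

end
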